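(* Let $\{\delta(c)\}_{c>0}$ be a family of decentralized sequential tests (not necessarily two-stage) with stopping times $N=N(c)$ and final decisions $D=D(c)$ such that, as $c\to0$, $\mathbf P_m\{D\neq m\}=O(c|\log c|)$ for every $m=0,\dots,M-1$. Then, as $c\to0$, for every $m=0,\dots,M-1$, $$\mathbf E_m\{N\}\ge\frac{|\log c|-\log|\log c|+O(1)}{I(m)}=(1+o(1))\frac{|\log c|}{I(m)}.$$
   Context: Setting: a single sensor observes raw data $X_1,X_2,\dots$ which, under state $m\in\{0,\dots,M-1\}$ (probability $\mathbf P_m$, expectation $\mathbf E_m$), are i.i.d. with density $f_m$ with respect to a common $\sigma$-finite measure. Standing assumption: for all $m\neq m'$, $0<\mathbf E_m[\log(f_m(X_1)/f_{m'}(X_1))]<\infty$. Sensor messages are binary, in $\{0,1\}$. A deterministic quantizer is a measurable map $\phi$ from the observation space to $\{0,1\}$; $\Phi$ is the set of these. A randomized quantizer $\bar\phi=\sum_j p^j\phi^j$ is a probability distribution $(p^j)$ on a countable set $\{\phi^j\}\subset\Phi$; deterministic quantizers are identified with randomized ones putting mass one on themselves; $\bar\Phi$ is the set of all quantizers. For $\phi\in\Phi$, $f_m(u;\phi)=\mathbf P_m(\phi(X_1)=u)$ and $I(m,m';\phi)=\sum_{u}f_m(u;\phi)\log\frac{f_m(u;\phi)}{f_{m'}(u;\phi)}$; for $\bar\phi=\sum_jp^j\phi^j$, $I(m,m';\bar\phi)=\sum_jp^jI(m,m';\phi^j)$; $I(m;\bar\phi)=\min_{m'\neq m}I(m,m';\bar\phi)$;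 and the maximin information number is $I(m)=\sup_{\bar\phi\in\bar\Phi}I(m;\bar\phi)$. Decentralized test: at each time $n$ the sensor sends $U_n=\tilde\phi_n(X_n)$, where the quantizer $\tilde\phi_n\in\bar\Phi$ (deterministic, or randomized with the randomization either revealed or not revealed to the fusion center) is determined by feedback from past messages $U_1,\dots,U_{n-1}$ (and possibly independent randomization). Let $\mathcal F_{n-1}$ be the $\sigma$-algebra generated by $U_1,\dots,U_{n-1}$ and the quantizers $\tilde\phi_1,\dots,\tilde\phi_n$ as known to the fusion center, so that conditionally on $\mathcal F_{n-1}$, under $\mathbf P_m$, $U_n$ has probability mass function $u\mapsto\mathbf P_m(\tilde\phi_n(X_n)=u)$. The test consists of a stopping time $N$ with respect to $(\mathcal F_n)$ and an $\mathcal F_N$-measurable final decision $D\in\{0,\dots,M-1\}$. *)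

theory Defs
  imports "HOL-Probability.Probability" "HOL-Library.Landau_Symbols"
begin

text \<open>Binary messages are modelled by bool (True = 1, False = 0).
  A deterministic quantizer is a measurable map from the observation space to bool.\<close>

type_synonym 'x quant = "'x \<Rightarrow> bool"

text \<open>A fusion-center history: the quantizers used so far (as known to the fusion
  center) together with the messages received.\<close>
type_synonym 'x hist = "('x quant \<times> bool) list"

text \<open>Fusion-center information after n messages: the history of length n and the
  quantizer to be used at the next step (F_n in the paper).\<close>
type_synonym 'x state = "'x hist \<times> 'x quant"

definition Qm :: "'x measure \<Rightarrow> (nat \<Rightarrow> 'x \<Rightarrow> real) \<Rightarrow> nat \<Rightarrow> 'x measure" where
  "Qm \<mu> f m = density \<mu> (\<lambda>x. ennreal (f m x))"

definition Phi :: "'x measure \<Rightarrow> 'x quant set" where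
  "Phi \<mu> = measurable \<mu> (count_space UNIV)"

definition qpmf :: "'x measure \<Rightarrow> (nat \<Rightarrow> 'x \<Rightarrow> real) \<Rightarrow> nat \<Rightarrow> 'x quant \<Rightarrow> bool \<Rightarrow> real" where
  "qpmf \<mu> f m \<phi> u = measure (Qm \<mu> f m) {x \<in> space \<mu>. \<phi> x = u}"

text \<open>I(m,m';phi) for a deterministic quantizer (convention 0 log(0/a) = 0).\<close>
definition Idet :: "'x measure \<Rightarrow> (nat \<Rightarrow> 'x \<Rightarrow> real) \<Rightarrow> nat \<Rightarrow> nat \<Rightarrow> 'x quant \<Rightarrow> real" where
  "Idet \<mu> f m m' \<phi> = (\<Sum>u\<in>(UNIV::bool set). qpmf \<mu> f m \<phi> u * ln (qpmf \<mu> f m \<phi> u / qpmf \<mu> f m' \<phi> u))"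

text \<open>Randomized quantizers: probability distributions with countable support (pmf)
  on deterministic quantizers; I(m,m';bar phi) = sum_j p^j I(m,m';phi^j).\<close>
definition Irand :: "'x measure \<Rightarrow> (nat \<Rightarrow> 'x \<Rightarrow> real) \<Rightarrow> nat \<Rightarrow> nat \<Rightarrow> 'x quant pmf \<Rightarrow> real" where
  "Irand \<mu> f m m' p = measure_pmf.expectation p (Idet \<mu> f m m')"

definition randomized_quantizers :: "'x measure \<Rightarrow> 'x quant pmf set" where
  "randomized_quantizers \<mu> = {p. set_pmf p \<subseteq> Phi \<mu>}"

definition Imin :: "nat \<Rightarrow> 'x measure \<Rightarrow> (nat \<Rightarrow> 'x \<Rightarrow> real) \<Rightarrow> nat \<Rightarrow> 'x quant pmf \<Rightarrow> real" where
  "Imin M \<mu> f m p = Min ((\<lambda>m'. Irand \<mu> f m m' p) ` {m'. m' < M \<and> m' \<noteq> m})"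

definition Imaximin :: "nat \<Rightarrow> 'x measure \<Rightarrow> (nat \<Rightarrow> 'x \<Rightarrow> real) \<Rightarrow> nat \<Rightarrow> real" where
  "Imaximin M \<mu> f m = (SUP p \<in> randomized_quantizers \<mu>. Imin M \<mu> f m p)"

text \<open>A decentralized test is given by a feedback policy pol (the law of the next
  deterministic quantizer given everything the fusion center knows; this covers
  deterministic feedback and randomization), a stopping rule stop and a decision
  rule dec, both functions of the fusion-center information.
  traj ... m n is the law under P_m of the fusion-center information after n messages:
  conditionally on it, U_{n+1} is Bernoulli with parameter P_m(phi(X)=1).\<close>
primrec traj :: "'x measure \<Rightarrow> (nat \<Rightarrow> 'x \<Rightarrow> real) \<Rightarrow> ('x hist \<Rightarrow> 'x quant pmf)
    \<Rightarrow> nat \<Rightarrow> nat \<Rightarrow> 'x state pmf" where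
  "traj \<mu> f pol m 0 = map_pmf (\<lambda>\<phi>. ([], \<phi>)) (pol [])"
| "traj \<mu> f pol m (Suc n) =
     bind_pmf (traj \<mu> f pol m n) (\<lambda>(h, \<phi>).
       bind_pmf (bernoulli_pmf (qpmf \<mu> f m \<phi> True)) (\<lambda>u.
         map_pmf (\<lambda>\<phi>'. (h @ [(\<phi>, u)], \<phi>')) (pol (h @ [(\<phi>, u)]))))"

text \<open>The information available after k messages, extracted from a later state.\<close>
definition prefix_state :: "nat \<Rightarrow> 'x state \<Rightarrow> 'x state" where
  "prefix_state k s = (take k (fst s), if k < length (fst s) then fst (fst s ! k) else snd s)"

text \<open>N = LEAST n. stop (information after n messages).\<close>
definition stopped_by :: "('x state \<Rightarrow> bool) \<Rightarrow> nat \<Rightarrow> 'x state \<Rightarrow> bool" where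
  "stopped_by stop n s = (\<exists>k\<le>n. stop (prefix_state k s))"

definition stops_at :: "('x state \<Rightarrow> bool) \<Rightarrow> nat \<Rightarrow> 'x state \<Rightarrow> bool" where
  "stops_at stop n s = (stop (prefix_state n s) \<and> (\<forall>k<n. \<not> stop (prefix_state k s)))"

text \<open>E_m[N] = sum_{n>=0} P_m(N > n)  (equals infinity if P_m(N = infinity) > 0).\<close>
definition expected_N :: "'x measure \<Rightarrow> (nat \<Rightarrow> 'x \<Rightarrow> real) \<Rightarrow> ('x hist \<Rightarrow> 'x quant pmf)
    \<Rightarrow> ('x state \<Rightarrow> bool) \<Rightarrow> nat \<Rightarrow> ennreal" where
  "expected_N \<mu> f pol stop m =
     (\<Sum>n. ennreal (measure_pmf.prob (traj \<mu> f pol m n) {s. \<not> stopped_by stop n s}))"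

definition error_prob :: "'x measure \<Rightarrow> (nat \<Rightarrow> 'x \<Rightarrow> real) \<Rightarrow> ('x hist \<Rightarrow> 'x quant pmf)
    \<Rightarrow> ('x state \<Rightarrow> bool) \<Rightarrow> ('x state \<Rightarrow> nat) \<Rightarrow> nat \<Rightarrow> real" where
  "error_prob \<mu> f pol stop dec m =
     (\<Sum>n. measure_pmf.prob (traj \<mu> f pol m n) {s. stops_at stop n s \<and> dec s \<noteq> m})"

end

theory Submission
  imports Defs "HOL-Real_Asymp.Real_Asymp"
begin


definition stepK :: "('x quant \<Rightarrow> real) \<Rightarrow> ('x hist \<Rightarrow> 'x quant pmf) \<Rightarrow> 'x state \<Rightarrow> 'x state pmf" where
 "stepK q pol s = bind_pmf (bernoulli_pmf (q (snd s)))
    (\<lambda>u. map_pmf (\<lambda>\<phi>'. (fst s @ [(snd s, u)], \<phi>')) (pol (fst s @ [(snd s, u)])))"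

primrec trajg :: "('x quant \<Rightarrow> real) \<Rightarrow> ('x hist \<Rightarrow> 'x quant pmf) \<Rightarrow> nat \<Rightarrow> 'x state pmf" where
  "trajg q pol 0 = map_pmf (\<lambda>\<phi>. ([], \<phi>)) (pol [])"
| "trajg q pol (Suc n) = bind_pmf (trajg q pol n) (stepK q pol)"

primrec strajs :: "('x quant \<Rightarrow> real) \<Rightarrow> ('x hist \<Rightarrow> 'x quant pmf) \<Rightarrow> ('x state \<Rightarrow> bool) \<Rightarrow> nat \<Rightarrow> 'x state pmf" where
  "strajs q pol stop 0 = map_pmf (\<lambda>\<phi>. ([], \<phi>)) (pol [])"
| "strajs q pol stop (Suc n) = bind_pmf (strajs q pol stop n) (\<lambda>s. if stop s then return_pmf s else stepK q pol s)"

lemma traj_eq: "traj \<mu> f pol m n = trajg (\<lambda>\<phi>. qpmf \<mu> f m \<phi> True) pol n"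
proof (induction n)
  case 0 then show ?case by simp
next
  case (Suc n)
  have "(\<lambda>(h, \<phi>). bind_pmf (bernoulli_pmf (qpmf \<mu> f m \<phi> True)) (\<lambda>u.
       map_pmf (\<lambda>\<phi>'. (h @ [(\<phi>, u)], \<phi>')) (pol (h @ [(\<phi>, u)])))) = stepK (\<lambda>\<phi>. qpmf \<mu> f m \<phi> True) pol"
    by (auto simp: stepK_def fun_eq_iff)
  then show ?case using Suc by simp
qed

lemma set_stepK: "t \<in> set_pmf (stepK q pol s) \<Longrightarrow> \<exists>u. fst t = fst s @ [(snd s, u)] \<and> snd t \<in> set_pmf (pol (fst t))"
  by (auto simp: stepK_def)

lemma trajg_len: "s \<in> set_pmf (trajg q pol n) \<Longrightarrow> length (fst s) = n"
  by (induction n arbitrary: s) (auto dest!: set_stepK)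

lemma strajs_len: "s \<in> set_pmf (strajs q pol stop n) \<Longrightarrow> length (fst s) \<le> n \<and> (\<not> stop s \<longrightarrow> length (fst s) = n)"
proof (induction n arbitrary: s)
  case 0 then show ?case by auto
next
  case (Suc n)
  then obtain s0 where s0: "s0 \<in> set_pmf (strajs q pol stop n)" 
     and s: "s \<in> set_pmf (if stop s0 then return_pmf s0 else stepK q pol s0)" by auto
  show ?case
  proof (cases "stop s0")
    case True then show ?thesis using s Suc.IH[OF s0] by auto
  next
    case False then show ?thesis using s Suc.IH[OF s0] by (auto dest!: set_stepK)
  qed
qed

lemma prefix_full: "length (fst s) = n \<Longrightarrow> prefix_state n s = s"
  by (cases s) (simp add: prefix_state_def)

lemma prefix_step: assumes "length (fst s) = n" "fst t = fst s @ [(snd s, u)]" "k \<le> n"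
  shows "prefix_state k t = prefix_state k s"
  using assms by (cases "k < n") (auto simp: prefix_state_def nth_append)

definition fr :: "('x state \<Rightarrow> bool) \<Rightarrow> nat \<Rightarrow> 'x state \<Rightarrow> 'x state" where
  "fr stop n s = (if stopped_by stop n s then prefix_state (LEAST k. stop (prefix_state k s)) s else s)"

lemma fr_stop: assumes "length (fst s) = n" shows "stop (fr stop n s) \<longleftrightarrow> stopped_by stop n s"
proof (cases "stopped_by stop n s")
  case True
  then obtain k where "stop (prefix_state k s)" by (auto simp: stopped_by_def)
  then have "stop (prefix_state (LEAST k. stop (prefix_state k s)) s)" by (rule LeastI)
  then show ?thesis using True by (simp add: fr_def)
next
  case False
  then show ?thesis using assms prefix_full[OF assms] by (auto simp: fr_def stopped_by_def)
qed

lemma fr_step: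
  assumes len: "length (fst s) = n" and t: "fst t = fst s @ [(snd s, u)]"
  shows "fr stop (Suc n) t = (if stopped_by stop n s then fr stop n s else t)"
proof (cases "stopped_by stop n s")
  case True
  then obtain k where k: "k \<le> n" "stop (prefix_state k s)" by (auto simp: stopped_by_def)
  have eqk: "\<And>j. j \<le> n \<Longrightarrow> prefix_state j t = prefix_state j s" using prefix_step[OF len t] by blast
  have st: "stopped_by stop (Suc n) t" using k eqk by (auto simp: stopped_by_def intro!: exI[of _ k])
  have L1: "(LEAST j. stop (prefix_state j s)) \<le> k" using k by (intro Least_le) 
  have "(LEAST j. stop (prefix_state j t)) = (LEAST j. stop (prefix_state j s))"
  proof (rule Least_equality)
    show "stop (prefix_state (LEAST j. stop (prefix_state j s)) t)"
      using eqk[of "LEAST j. stop (prefix_state j s)"] L1 k LeastI[of "\<lambda>j. stop (prefix_state j s)" k] by auto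
    fix y assume y: "stop (prefix_state y t)"
    show "(LEAST j. stop (prefix_state j s)) \<le> y"
    proof (cases "y \<le> n")
      case True then show ?thesis using y eqk[OF True] by (auto intro: Least_le)
    next
      case False then show ?thesis using L1 k by auto
    qed
  qed
  then show ?thesis using True st L1 k eqk[of "LEAST j. stop (prefix_state j s)"] by (simp add: fr_def)
next
  case False
  have lt: "length (fst t) = Suc n" using len t by simp
  have "(LEAST j. stop (prefix_state j t)) = Suc n" if "stopped_by stop (Suc n) t"
  proof (rule Least_equality)
    show "stop (prefix_state (Suc n) t)"
      using that False prefix_step[OF len t] by (auto simp: stopped_by_def le_Suc_eq)
    fix y assume y: "stop (prefix_state y t)"
    show "Suc n \<le> y"
    proof (rule ccontr)
      assume "\<not> Suc n \<le> y" then have "y \<le> n" by simp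
      then show False using y False prefix_step[OF len t] by (auto simp: stopped_by_def)
    qed
  qed
  then show ?thesis using False prefix_full[OF lt] by (auto simp: fr_def)
qed

lemma strajs_fr: "strajs q pol stop n = map_pmf (fr stop n) (trajg q pol n)"
proof (induction n)
  case 0
  have "fr stop 0 s = s" if "s \<in> set_pmf (trajg q pol 0)" for s
    using that by (auto simp: fr_def stopped_by_def prefix_state_def)
  then show ?case by (simp add: map_pmf_comp cong: map_pmf_cong)
next
  case (Suc n)
  have "strajs q pol stop (Suc n) = bind_pmf (trajg q pol n) (\<lambda>s. (\<lambda>s. if stop s then return_pmf s else stepK q pol s) (fr stop n s))"
    by (simp add: Suc bind_map_pmf)
  also have "\<dots> = bind_pmf (trajg q pol n) (\<lambda>s. map_pmf (fr stop (Suc n)) (stepK q pol s))"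
  proof (rule bind_pmf_cong[OF refl])
    fix s assume s: "s \<in> set_pmf (trajg q pol n)"
    have len: "length (fst s) = n" using trajg_len[OF s] .
    have frs: "fr stop (Suc n) t = (if stopped_by stop n s then fr stop n s else t)"
      if tt: "t \<in> set_pmf (stepK q pol s)" for t
    proof -
      obtain u where "fst t = fst s @ [(snd s, u)]" using set_stepK[OF tt] by blast
      then show ?thesis using fr_step[OF len] by blast
    qed
    show "(if stop (fr stop n s) then return_pmf (fr stop n s) else stepK q pol (fr stop n s)) =
          map_pmf (fr stop (Suc n)) (stepK q pol s)"
    proof (cases "stopped_by stop n s")
      case True
      have "map_pmf (fr stop (Suc n)) (stepK q pol s) = map_pmf (\<lambda>_. fr stop n s) (stepK q pol s)"
        by (rule map_pmf_cong[OF refl]) (use True frs in auto)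
      then show ?thesis using True fr_stop[OF len] by simp
    next
      case False
      have "map_pmf (fr stop (Suc n)) (stepK q pol s) = map_pmf id (stepK q pol s)"
        by (rule map_pmf_cong[OF refl]) (use False frs in auto)
      moreover have "fr stop n s = s" using False by (simp add: fr_def)
      ultimately show ?thesis using False fr_stop[OF len] by simp
    qed
  qed
  also have "\<dots> = map_pmf (fr stop (Suc n)) (trajg q pol (Suc n))"
    by (simp add: map_bind_pmf)
  finally show ?case .
qed


lemma emeasure_cong_set_pmf:
  assumes "\<And>x. x \<in> set_pmf p \<Longrightarrow> x \<in> A \<longleftrightarrow> x \<in> B"
  shows "emeasure (measure_pmf p) A = emeasure (measure_pmf p) B"
proof -
  have "A \<inter> set_pmf p = B \<inter> set_pmf p" using assms by auto
  then show ?thesis by (metis emeasure_Int_set_pmf)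
qed

lemma stops_at_step:
  assumes len: "length (fst s) = n" and t: "fst t = fst s @ [(snd s, u)]"
  shows "stops_at stop (Suc n) t \<longleftrightarrow> \<not> stopped_by stop n s \<and> stop t"
proof -
  have lt: "length (fst t) = Suc n" using len t by simp
  have "(\<forall>k<Suc n. \<not> stop (prefix_state k t)) \<longleftrightarrow> \<not> stopped_by stop n s"
    using prefix_step[OF len t] by (auto simp: stopped_by_def less_Suc_eq_le)
  then show ?thesis using prefix_full[OF lt] by (auto simp: stops_at_def)
qed

lemma strajs_not_stop_integral:
  "(\<integral>\<^sup>+ s. (if stop s then 0 else g s) \<partial>strajs q pol stop n) =
   (\<integral>\<^sup>+ s. (if stopped_by stop n s then 0 else g s) \<partial>trajg q pol n)"
proof -
  have "(\<integral>\<^sup>+ s. (if stop s then 0 else g s) \<partial>strajs q pol stop n) =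
     (\<integral>\<^sup>+ s. (if stop (fr stop n s) then 0 else g (fr stop n s)) \<partial>trajg q pol n)"
    by (simp add: strajs_fr)
  also have "\<dots> = (\<integral>\<^sup>+ s. (if stopped_by stop n s then 0 else g s) \<partial>trajg q pol n)"
  proof (intro nn_integral_cong_AE AE_pmfI)
    fix s assume s: "s \<in> set_pmf (trajg q pol n)"
    have eq: "stop (fr stop n s) = stopped_by stop n s" by (rule fr_stop[OF trajg_len[OF s]])
    show "(if stop (fr stop n s) then 0 else g (fr stop n s)) = (if stopped_by stop n s then 0 else g s)"
      by (simp only: eq) (simp add: fr_def)
  qed
  finally show ?thesis .
qed

lemma strajs_not_stop:
  "emeasure (strajs q pol stop n) {s. \<not> stop s} = emeasure (trajg q pol n) {s. \<not> stopped_by stop n s}"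
  using strajs_not_stop_integral[where stop=stop and g="\<lambda>_. 1" and q=q and pol=pol and n=n]
  by (simp flip: nn_integral_indicator add: indicator_def of_bool_def if_distrib cong: if_cong)
     (smt (verit, best) nn_integral_cong)

lemma strajs_stop_B:
  "emeasure (strajs q pol stop n) {s. stop s \<and> B s} =
   (\<Sum>k\<le>n. emeasure (trajg q pol k) {s. stops_at stop k s \<and> B s})"
proof (induction n)
  case 0
  have "emeasure (strajs q pol stop 0) {s. stop s \<and> B s} = emeasure (trajg q pol 0) {s. stops_at stop 0 s \<and> B s}"
    by (simp del: emeasure_map_pmf add: emeasure_cong_set_pmf[symmetric])
       (rule emeasure_cong_set_pmf, auto simp: stops_at_def prefix_state_def)
  then show ?case by simp
next
  case (Suc n)
  let ?E = "{s. stop s \<and> B s}"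
  let ?g = "\<lambda>s. emeasure (stepK q pol s) ?E"
  have "emeasure (strajs q pol stop (Suc n)) ?E =
     (\<integral>\<^sup>+ s. (if stop s then indicator ?E s else ?g s) \<partial>strajs q pol stop n)"
    by (simp, intro nn_integral_cong) simp
  also have "\<dots> = (\<integral>\<^sup>+ s. indicator ?E s + (if stop s then 0 else ?g s) \<partial>strajs q pol stop n)"
    by (intro nn_integral_cong) (auto simp: indicator_def)
  also have "\<dots> = emeasure (strajs q pol stop n) ?E + (\<integral>\<^sup>+ s. (if stop s then 0 else ?g s) \<partial>strajs q pol stop n)"
    by (subst nn_integral_add) auto
  also have "(\<integral>\<^sup>+ s. (if stop s then 0 else ?g s) \<partial>strajs q pol stop n) =
      (\<integral>\<^sup>+ s. (if stopped_by stop n s then 0 else ?g s) \<partial>trajg q pol n)"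
    by (rule strajs_not_stop_integral)
  also have "\<dots> = emeasure (trajg q pol (Suc n)) {s. stops_at stop (Suc n) s \<and> B s}"
  proof -
    have "emeasure (stepK q pol s) {t. stops_at stop (Suc n) t \<and> B t} = (if stopped_by stop n s then 0 else ?g s)"
      if s: "s \<in> set_pmf (trajg q pol n)" for s
    proof -
      have "emeasure (stepK q pol s) {t. stops_at stop (Suc n) t \<and> B t} =
            emeasure (stepK q pol s) {t. \<not> stopped_by stop n s \<and> stop t \<and> B t}"
      proof (rule emeasure_cong_set_pmf)
        fix t assume "t \<in> set_pmf (stepK q pol s)"
        then obtain u where "fst t = fst s @ [(snd s, u)]" using set_stepK by blast
        then show "t \<in> {t. stops_at stop (Suc n) t \<and> B t} \<longleftrightarrow> t \<in> {t. \<not> stopped_by stop n s \<and> stop t \<and> B t}"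
          using stops_at_step[OF trajg_len[OF s]] by auto
      qed
      then show ?thesis by auto
    qed
    then show ?thesis by (auto intro!: nn_integral_cong_AE AE_pmfI)
  qed
  finally show ?case using Suc by simp
qed


lemma pmf_bind_dens:
  assumes P: "\<And>s. pmf P s = L s * pmf Q s"
    and K: "\<And>s t. s \<in> set_pmf Q \<Longrightarrow> L s * pmf (KP s) t = L' t * pmf (KQ s) t"
    and L: "\<And>s. L s \<ge> 0" and L': "L' t \<ge> 0"
  shows "pmf (bind_pmf P KP) t = L' t * pmf (bind_pmf Q KQ) t"
proof -
  have "ennreal (pmf (bind_pmf P KP) t) = (\<integral>\<^sup>+ s. ennreal (pmf (KP s) t) \<partial>P)"
    by (rule ennreal_pmf_bind)
  also have "\<dots> = (\<integral>\<^sup>+ s. ennreal (pmf P s) * ennreal (pmf (KP s) t) \<partial>count_space UNIV)"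
    by (rule nn_integral_measure_pmf)
  also have "\<dots> = (\<integral>\<^sup>+ s. ennreal (pmf Q s) * ennreal (L s * pmf (KP s) t) \<partial>count_space UNIV)"
    by (intro nn_integral_cong) (simp add: P L ennreal_mult[symmetric] mult_ac)
  also have "\<dots> = (\<integral>\<^sup>+ s. ennreal (L s * pmf (KP s) t) \<partial>Q)"
    by (rule nn_integral_measure_pmf[symmetric])
  also have "\<dots> = (\<integral>\<^sup>+ s. ennreal (L' t) * ennreal (pmf (KQ s) t) \<partial>Q)"
    by (intro nn_integral_cong_AE AE_pmfI) (simp add: K L' ennreal_mult)
  also have "\<dots> = ennreal (L' t) * (\<integral>\<^sup>+ s. ennreal (pmf (KQ s) t) \<partial>Q)"
    by (rule nn_integral_cmult) auto
  also have "\<dots> = ennreal (L' t * pmf (bind_pmf Q KQ) t)"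
    by (simp add: ennreal_pmf_bind ennreal_mult L')
  finally show ?thesis using L' by simp
qed

definition qb :: "('x quant \<Rightarrow> real) \<Rightarrow> 'x quant \<Rightarrow> bool \<Rightarrow> real" where
  "qb q \<phi> u = (if u then q \<phi> else 1 - q \<phi>)"

definition rr :: "('x quant \<Rightarrow> real) \<Rightarrow> ('x quant \<Rightarrow> real) \<Rightarrow> 'x quant \<Rightarrow> bool \<Rightarrow> real" where
  "rr q q' \<phi> u = \<bar>qb q \<phi> u / qb q' \<phi> u\<bar>"

definition LL :: "('x quant \<Rightarrow> real) \<Rightarrow> ('x quant \<Rightarrow> real) \<Rightarrow> 'x state \<Rightarrow> real" where
  "LL q q' s = prod_list (map (\<lambda>(\<phi>, u). rr q q' \<phi> u) (fst s))"

definition Iq :: "('x quant \<Rightarrow> real) \<Rightarrow> ('x quant \<Rightarrow> real) \<Rightarrow> 'x quant \<Rightarrow> real" where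
  "Iq q q' \<phi> = (\<Sum>u\<in>(UNIV::bool set). qb q \<phi> u * ln (qb q \<phi> u / qb q' \<phi> u))"

definition phiL :: "real \<Rightarrow> real" where
  "phiL x = x * ln x - x + 1"

lemma ln_ge_1_minus_inv: "0 < x \<Longrightarrow> 1 - 1 / x \<le> ln (x::real)"
proof -
  assume x: "0 < x"
  have "ln (1/x) \<le> 1/x - 1" using x by (intro ln_le_minus_one) auto
  then show ?thesis using x by (simp add: ln_div)
qed

lemma phiL_nonneg: "0 \<le> x \<Longrightarrow> 0 \<le> phiL x"
proof (cases "x = 0")
  case False
  assume "0 \<le> x" then have x: "0 < x" using False by simp
  have "x * (1 - 1/x) \<le> x * ln x" using ln_ge_1_minus_inv[OF x] x by (intro mult_left_mono) auto
  moreover have "x * (1 - 1/x) = x - 1" using x by (simp add: field_simps)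
  ultimately show ?thesis by (simp add: phiL_def)
qed (simp add: phiL_def)

locale twoq =
  fixes q q' :: "'x quant \<Rightarrow> real" and Phi0 :: "'x quant set" and pol :: "'x hist \<Rightarrow> 'x quant pmf"
  assumes qb1: "\<phi> \<in> Phi0 \<Longrightarrow> 0 \<le> q \<phi> \<and> q \<phi> \<le> 1"
    and qb2: "\<phi> \<in> Phi0 \<Longrightarrow> 0 \<le> q' \<phi> \<and> q' \<phi> \<le> 1"
    and abscont: "\<phi> \<in> Phi0 \<Longrightarrow> qb q' \<phi> u = 0 \<Longrightarrow> qb q \<phi> u = 0"
    and polPhi: "set_pmf (pol h) \<subseteq> Phi0"
begin

lemma qb_nonneg: "\<phi> \<in> Phi0 \<Longrightarrow> 0 \<le> qb q \<phi> u" "\<phi> \<in> Phi0 \<Longrightarrow> 0 \<le> qb q' \<phi> u"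
  using qb1 qb2 by (auto simp: qb_def)

lemma rr_nonneg: "0 \<le> rr q q' \<phi> u"
  by (simp add: rr_def)

lemma strajs_snd: "s \<in> set_pmf (strajs q0 pol stop n) \<Longrightarrow> snd s \<in> Phi0"
proof (induction n arbitrary: s)
  case 0 then show ?case using polPhi[of "[]"] by auto
next
  case (Suc n)
  then obtain s0 where s0: "s0 \<in> set_pmf (strajs q0 pol stop n)"
     and s: "s \<in> set_pmf (if stop s0 then return_pmf s0 else stepK q0 pol s0)" by auto
  show ?case
  proof (cases "stop s0")
    case True then show ?thesis using s Suc.IH[OF s0] by auto
  next
    case False then show ?thesis using s Suc.IH[OF s0] polPhi by (auto dest!: set_stepK)
  qed
qed

lemma LL_nonneg: "0 \<le> LL q q' s"
  unfolding LL_def by (intro prod_list_nonneg) (auto simp: rr_def)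

lemma pmf_bern: "\<phi> \<in> Phi0 \<Longrightarrow> pmf (bernoulli_pmf (q \<phi>)) u = qb q \<phi> u"
  "\<phi> \<in> Phi0 \<Longrightarrow> pmf (bernoulli_pmf (q' \<phi>)) u = qb q' \<phi> u"
  using qb1 qb2 by (cases u; simp add: qb_def)+

lemma stepK_dens:
  assumes s: "snd s \<in> Phi0"
  shows "pmf (stepK q pol s) t = rr q q' (snd s) (snd (last (fst t))) * pmf (stepK q' pol s) t"
  unfolding stepK_def
proof (rule pmf_bind_dens[where L="rr q q' (snd s)"])
  fix u show "pmf (bernoulli_pmf (q (snd s))) u = rr q q' (snd s) u * pmf (bernoulli_pmf (q' (snd s))) u"
    using abscont[OF s, of u] qb_nonneg[OF s, of u] by (simp add: pmf_bern[OF s] rr_def)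
next
  fix u t
  show "rr q q' (snd s) u * pmf (map_pmf (\<lambda>\<phi>'. (fst s @ [(snd s, u)], \<phi>')) (pol (fst s @ [(snd s, u)]))) t =
        rr q q' (snd s) (snd (last (fst t))) * pmf (map_pmf (\<lambda>\<phi>'. (fst s @ [(snd s, u)], \<phi>')) (pol (fst s @ [(snd s, u)]))) t"
  proof (cases "t \<in> set_pmf (map_pmf (\<lambda>\<phi>'. (fst s @ [(snd s, u)], \<phi>')) (pol (fst s @ [(snd s, u)])))")
    case True then show ?thesis by auto
  next
    case False then show ?thesis by (simp only: pmf_eq_0_set_pmf[symmetric])
  qed
qed (use rr_nonneg in auto)

lemma strajs_dens:
  "pmf (strajs q pol stop n) s = LL q q' s * pmf (strajs q' pol stop n) s"
proof (induction n arbitrary: s)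
  case 0
  show ?case
  proof (cases "s \<in> set_pmf (strajs q' pol stop 0)")
    case True then show ?thesis by (auto simp: LL_def)
  next
    case False
    then have "pmf (strajs q' pol stop 0) s = 0" by (simp only: pmf_eq_0_set_pmf[symmetric])
    moreover have "strajs q pol stop 0 = strajs q' pol stop 0" by simp
    ultimately show ?thesis by simp
  qed
next
  case (Suc n)
  show ?case unfolding strajs.simps
  proof (rule pmf_bind_dens[where L="LL q q'"])
    show "pmf (strajs q pol stop n) s = LL q q' s * pmf (strajs q' pol stop n) s" for s by (rule Suc.IH)
  next
    fix s0 t assume s0: "s0 \<in> set_pmf (strajs q' pol stop n)"
    have sP: "snd s0 \<in> Phi0" using strajs_snd[OF s0] .
    show "LL q q' s0 * pmf (if stop s0 then return_pmf s0 else stepK q pol s0) t =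
          LL q q' t * pmf (if stop s0 then return_pmf s0 else stepK q' pol s0) t"
    proof (cases "stop s0")
      case True then show ?thesis by (auto simp: indicator_def)
    next
      case False
      show ?thesis
      proof (cases "t \<in> set_pmf (stepK q' pol s0)")
        case True
        then obtain u where u: "fst t = fst s0 @ [(snd s0, u)]" using set_stepK by blast
        show ?thesis using False stepK_dens[OF sP, of t] u by (simp add: LL_def)
      next
        case nt: False
        have "pmf (stepK q pol s0) t = 0" using stepK_dens[OF sP, of t] nt by (simp add: set_pmf_iff)
        then show ?thesis using False nt by (simp add: set_pmf_iff)
      qed
    qed
  next
  qed (rule LL_nonneg)+
qed

end


lemma term_identity:
  fixes a b L :: real
  assumes a: "0 \<le> a" and b: "0 \<le> b" and ab: "b = 0 \<Longrightarrow> a = 0" and L: "0 \<le> L"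
  shows "b * phiL (L * \<bar>a / b\<bar>) = L * a * ln L + L * a * ln (a / b) - L * a + b"
proof (cases "b = 0")
  case True then show ?thesis using ab by (simp add: phiL_def)
next
  case bn: False
  then have bp: "0 < b" using b by simp
  show ?thesis
  proof (cases "a = 0 \<or> L = 0")
    case True then show ?thesis by (auto simp: phiL_def)
  next
    case False
    then have ap: "0 < a" and Lp: "0 < L" using a L by auto
    have l: "ln (L * (a / b)) = ln L + ln (a / b)" using ap bp Lp by (intro ln_mult_pos) auto
    have "b * phiL (L * \<bar>a / b\<bar>) = b * (L * (a / b)) * ln (L * (a / b)) - b * (L * (a / b)) + b"
      using ap bp by (simp add: phiL_def algebra_simps)
    also have "b * (L * (a / b)) = L * a" using bp by simp
    finally show ?thesis unfolding l by (simp add: algebra_simps)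
  qed
qed

lemma phiL_convex:
  fixes L r :: real assumes L: "0 \<le> L" and r: "0 < r"
  shows "phiL r + ln r * (L - r) \<le> phiL L"
proof (cases "L = 0")
  case True then show ?thesis using r by (simp add: phiL_def)
next
  case False
  then have Lp: "0 < L" using L by simp
  have "1 - 1 / (L / r) \<le> ln (L / r)" using Lp r by (intro ln_ge_1_minus_inv) auto
  then have "L * (1 - r / L) \<le> L * (ln L - ln r)" using Lp r by (intro mult_left_mono) (auto simp: ln_div)
  moreover have "L * (1 - r / L) = L - r" using Lp by (simp add: field_simps)
  ultimately have "L - r \<le> L * ln L - L * ln r" by (simp add: algebra_simps)
  then show ?thesis by (simp add: phiL_def algebra_simps)
qed

context twoq begin

lemma qb_sum: "\<phi> \<in> Phi0 \<Longrightarrow> qb q \<phi> True + qb q \<phi> False = 1" "\<phi> \<in> Phi0 \<Longrightarrow> qb q' \<phi> True + qb q' \<phi> False = 1"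
  by (auto simp: qb_def)

lemma Iq_nonneg: assumes "\<phi> \<in> Phi0" shows "0 \<le> Iq q q' \<phi>"
proof -
  have t: "qb q \<phi> u - qb q' \<phi> u \<le> qb q \<phi> u * ln (qb q \<phi> u / qb q' \<phi> u)" for u
  proof -
    have a: "0 \<le> qb q \<phi> u" and b: "0 \<le> qb q' \<phi> u" using qb_nonneg[OF assms] by auto
    show ?thesis
    proof (cases "qb q \<phi> u = 0")
      case True then show ?thesis using b by simp
    next
      case False
      then have ap: "0 < qb q \<phi> u" using a by simp
      have bp: "0 < qb q' \<phi> u" using abscont[OF assms, of u] False b by force
      have "1 - 1 / (qb q \<phi> u / qb q' \<phi> u) \<le> ln (qb q \<phi> u / qb q' \<phi> u)"
        using ap bp by (intro ln_ge_1_minus_inv) auto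
      then have "qb q \<phi> u * (1 - 1 / (qb q \<phi> u / qb q' \<phi> u)) \<le> qb q \<phi> u * ln (qb q \<phi> u / qb q' \<phi> u)"
        using ap by (intro mult_left_mono) auto
      moreover have "qb q \<phi> u * (1 - 1 / (qb q \<phi> u / qb q' \<phi> u)) = qb q \<phi> u - qb q' \<phi> u"
        using ap bp by (simp add: field_simps)
      ultimately show ?thesis by simp
    qed
  qed
  have "0 = (qb q \<phi> True - qb q' \<phi> True) + (qb q \<phi> False - qb q' \<phi> False)" using qb_sum[OF assms] by simp
  also have "\<dots> \<le> Iq q q' \<phi>" unfolding Iq_def using t[of True] t[of False] by (simp add: UNIV_bool)
  finally show ?thesis .
qed

lemma inner_identity: assumes "\<phi> \<in> Phi0" and L: "0 \<le> L"
  shows "qb q' \<phi> True * phiL (L * rr q q' \<phi> True) + qb q' \<phi> False * phiL (L * rr q q' \<phi> False)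
     = phiL L + L * Iq q q' \<phi>"
proof -
  have e: "qb q' \<phi> u * phiL (L * rr q q' \<phi> u) = L * qb q \<phi> u * ln L + L * qb q \<phi> u * ln (qb q \<phi> u / qb q' \<phi> u) - L * qb q \<phi> u + qb q' \<phi> u" for u
    unfolding rr_def using qb_nonneg[OF assms(1)] abscont[OF assms(1)] L by (intro term_identity) auto
  have s1: "qb q \<phi> True + qb q \<phi> False = 1" "qb q' \<phi> True + qb q' \<phi> False = 1" using qb_sum[OF assms(1)] by auto
  have "L * qb q \<phi> True * ln L + L * qb q \<phi> False * ln L = L * ln L" 
    using s1(1) by (metis distrib_left mult.assoc mult.commute mult.right_neutral)
  moreover have "L * qb q \<phi> True + L * qb q \<phi> False = L" using s1(1) by (metis distrib_left mult.right_neutral)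
  ultimately show ?thesis unfolding e Iq_def using s1(2)
    by (simp add: UNIV_bool phiL_def algebra_simps)
qed

lemma dens_integral:
  "(\<integral>\<^sup>+ s. g s \<partial>strajs q pol stop n) = (\<integral>\<^sup>+ s. ennreal (LL q q' s) * g s \<partial>strajs q' pol stop n)"
  by (simp add: nn_integral_measure_pmf strajs_dens[where stop=stop and n=n] ennreal_mult LL_nonneg mult_ac)

definition Dn :: "('x state \<Rightarrow> bool) \<Rightarrow> nat \<Rightarrow> ennreal" where
  "Dn stop n = (\<integral>\<^sup>+ s. ennreal (phiL (LL q q' s)) \<partial>strajs q' pol stop n)"

lemma LL_step: "fst t = fst s @ [(snd s, u)] \<Longrightarrow> LL q q' t = LL q q' s * rr q q' (snd s) u"
  by (simp add: LL_def)

lemma inner_step: assumes "snd s \<in> Phi0"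
  shows "(\<integral>\<^sup>+ t. ennreal (phiL (LL q q' t)) \<partial>stepK q' pol s) = ennreal (phiL (LL q q' s) + LL q q' s * Iq q q' (snd s))"
proof -
  have "(\<integral>\<^sup>+ t. ennreal (phiL (LL q q' t)) \<partial>stepK q' pol s) =
        (\<integral>\<^sup>+ u. ennreal (phiL (LL q q' s * rr q q' (snd s) u)) \<partial>bernoulli_pmf (q' (snd s)))"
    unfolding stepK_def by (simp add: LL_step measure_pmf.emeasure_space_1)
  also have "\<dots> = ennreal (phiL (LL q q' s * rr q q' (snd s) True)) * ennreal (q' (snd s))
      + ennreal (phiL (LL q q' s * rr q q' (snd s) False)) * ennreal (1 - q' (snd s))"
    using qb2[OF assms] by simp
  also have "\<dots> = ennreal (qb q' (snd s) True * phiL (LL q q' s * rr q q' (snd s) True) +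
                         qb q' (snd s) False * phiL (LL q q' s * rr q q' (snd s) False))"
    using qb2[OF assms] phiL_nonneg[of "LL q q' s * rr q q' (snd s) _"] LL_nonneg rr_nonneg
    by (simp add: qb_def ennreal_mult[symmetric] mult_ac ennreal_plus[symmetric] del: ennreal_plus)
  also have "\<dots> = ennreal (phiL (LL q q' s) + LL q q' s * Iq q q' (snd s))"
    using inner_identity[OF assms LL_nonneg] by simp
  finally show ?thesis .
qed

lemma Dn_Suc: "Dn stop (Suc n) = Dn stop n + (\<integral>\<^sup>+ s. (if stop s then 0 else ennreal (Iq q q' (snd s))) \<partial>strajs q pol stop n)"
proof -
  have "Dn stop (Suc n) = (\<integral>\<^sup>+ s. ennreal (phiL (LL q q' s)) + (if stop s then 0 else ennreal (LL q q' s) * ennreal (Iq q q' (snd s))) \<partial>strajs q' pol stop n)"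
    unfolding Dn_def strajs.simps nn_integral_bind_pmf
  proof (intro nn_integral_cong_AE AE_pmfI)
    fix s assume s: "s \<in> set_pmf (strajs q' pol stop n)"
    have sP: "snd s \<in> Phi0" by (rule strajs_snd[OF s])
    show "(\<integral>\<^sup>+ t. ennreal (phiL (LL q q' t)) \<partial>(if stop s then return_pmf s else stepK q' pol s)) =
      ennreal (phiL (LL q q' s)) + (if stop s then 0 else ennreal (LL q q' s) * ennreal (Iq q q' (snd s)))"
    proof (cases "stop s")
      case True then show ?thesis by (simp add: nn_integral_return)
    next
      case False
      then show ?thesis using inner_step[OF sP] phiL_nonneg[OF LL_nonneg] Iq_nonneg[OF sP] LL_nonneg
        by (simp add: ennreal_mult)
    qed
  qed
  also have "\<dots> = Dn stop n + (\<integral>\<^sup>+ s. (if stop s then 0 else ennreal (LL q q' s) * ennreal (Iq q q' (snd s))) \<partial>strajs q' pol stop n)"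
    unfolding Dn_def by (rule nn_integral_add) auto
  also have "(\<integral>\<^sup>+ s. (if stop s then 0 else ennreal (LL q q' s) * ennreal (Iq q q' (snd s))) \<partial>strajs q' pol stop n)
     = (\<integral>\<^sup>+ s. (if stop s then 0 else ennreal (Iq q q' (snd s))) \<partial>strajs q pol stop n)"
    by (subst dens_integral[where stop=stop and n=n]) (auto intro!: nn_integral_cong)
  finally show ?thesis .
qed

lemma Dn_0: "Dn stop 0 = 0"
  unfolding Dn_def by (simp add: LL_def phiL_def)

lemma Dn_sum: "Dn stop n = (\<Sum>k<n. \<integral>\<^sup>+ s. (if stop s then 0 else ennreal (Iq q q' (snd s))) \<partial>strajs q pol stop k)"
  by (induction n) (simp_all add: Dn_0 Dn_Suc add.commute)

end


context twoq begin

lemma Dn_ge: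
  fixes stop n S
  defines "pS \<equiv> measure (strajs q pol stop n) S" and "qS \<equiv> measure (strajs q' pol stop n) S"
  assumes pS: "0 < pS" and qS: "0 < qS"
  shows "ennreal (pS * ln (pS / qS) - pS + qS) \<le> Dn stop n"
proof -
  define r where "r = pS / qS"
  define c where "c = ln r"
  define cp where "cp = max c 0"
  define cm where "cm = max (- c) 0"
  have r: "0 < r" using pS qS by (simp add: r_def)
  have cpm: "c = cp - cm" "0 \<le> cp" "0 \<le> cm" by (auto simp: cp_def cm_def)
  let ?Q = "strajs q' pol stop n"
  let ?X = "\<integral>\<^sup>+ s. ennreal (indicator S s * phiL (LL q q' s)) \<partial>?Q"
  have XD: "?X \<le> Dn stop n"
    unfolding Dn_def by (intro nn_integral_mono) (auto simp: indicator_def intro!: phiL_nonneg LL_nonneg)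
  have LS: "(\<integral>\<^sup>+ s. ennreal (indicator S s * LL q q' s) \<partial>?Q) = ennreal pS"
  proof -
    have "(\<integral>\<^sup>+ s. indicator S s \<partial>strajs q pol stop n) = (\<integral>\<^sup>+ s. ennreal (LL q q' s) * indicator S s \<partial>?Q)"
      by (rule dens_integral)
    then show ?thesis
      by (simp add: pS_def measure_pmf.emeasure_eq_measure indicator_mult_ennreal mult.commute)
  qed
  have QS: "(\<integral>\<^sup>+ s. ennreal (indicator S s) \<partial>?Q) = ennreal qS"
    by (simp add: qS_def ennreal_indicator measure_pmf.emeasure_eq_measure)
  have pt: "ennreal (indicator S s * phiL r) + ennreal (cp * (indicator S s * LL q q' s)) + ennreal (cm * r * indicator S s)
      \<le> ennreal (indicator S s * phiL (LL q q' s)) + ennreal (cp * r * indicator S s) + ennreal (cm * (indicator S s * LL q q' s))" for s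
  proof -
    have cv: "phiL r + c * (LL q q' s - r) \<le> phiL (LL q q' s)" by (rule phiL_convex[OF LL_nonneg r, unfolded c_def[symmetric]])
    have nn: "0 \<le> phiL r" "0 \<le> phiL (LL q q' s)" "0 \<le> LL q q' s" using phiL_nonneg r LL_nonneg by auto
    show ?thesis
    proof (cases "s \<in> S")
      case True
      have "phiL r + cp * LL q q' s + cm * r \<le> phiL (LL q q' s) + cp * r + cm * LL q q' s"
        using cv cpm by (simp add: algebra_simps)
      then show ?thesis using True nn cpm r
        by (simp add: ennreal_plus[symmetric] del: ennreal_plus)
    qed simp
  qed
  have cm_lemma: "(\<integral>\<^sup>+ s. ennreal (k * indicator S s) \<partial>?Q) = ennreal k * ennreal qS" if "0 \<le> k" for k
  proof -
    have "(\<integral>\<^sup>+ s. ennreal (k * indicator S s) \<partial>?Q) = (\<integral>\<^sup>+ s. ennreal k * ennreal (indicator S s) \<partial>?Q)"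
      using that by (intro nn_integral_cong) (simp add: ennreal_mult)
    also have "\<dots> = ennreal k * ennreal qS" by (subst nn_integral_cmult) (auto simp: QS)
    finally show ?thesis .
  qed
  have cl_lemma: "(\<integral>\<^sup>+ s. ennreal (k * (indicator S s * LL q q' s)) \<partial>?Q) = ennreal k * ennreal pS" if "0 \<le> k" for k
  proof -
    have "(\<integral>\<^sup>+ s. ennreal (k * (indicator S s * LL q q' s)) \<partial>?Q) = (\<integral>\<^sup>+ s. ennreal k * ennreal (indicator S s * LL q q' s) \<partial>?Q)"
      using that by (intro nn_integral_cong) (simp add: ennreal_mult')
    also have "\<dots> = ennreal k * ennreal pS" by (subst nn_integral_cmult) (auto simp: LS)
    finally show ?thesis .
  qed
  have add3: "(\<integral>\<^sup>+ s. f s + g s + h s \<partial>?Q) = (\<integral>\<^sup>+ s. f s \<partial>?Q) + (\<integral>\<^sup>+ s. g s \<partial>?Q) + (\<integral>\<^sup>+ s. h s \<partial>?Q)"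
    for f g h :: "_ \<Rightarrow> ennreal"
    by (simp add: nn_integral_add)
  have "(\<integral>\<^sup>+ s. ennreal (indicator S s * phiL r) + ennreal (cp * (indicator S s * LL q q' s)) + ennreal (cm * r * indicator S s) \<partial>?Q)
      \<le> (\<integral>\<^sup>+ s. ennreal (indicator S s * phiL (LL q q' s)) + ennreal (cp * r * indicator S s) + ennreal (cm * (indicator S s * LL q q' s)) \<partial>?Q)"
    by (intro nn_integral_mono pt)
  then have ineq: "ennreal (phiL r) * ennreal qS + ennreal cp * ennreal pS + ennreal (cm * r) * ennreal qS
      \<le> ?X + ennreal (cp * r) * ennreal qS + ennreal cm * ennreal pS"
    unfolding add3 using cl_lemma[of cp] cl_lemma[of cm] cm_lemma[of "cp * r"] cm_lemma[of "cm * r"] cm_lemma[of "phiL r"]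
      cpm r phiL_nonneg[of r]
    by (simp add: mult.commute)
  have rq: "r * qS = pS" using qS by (simp add: r_def)
  have e1: "ennreal (phiL r) * ennreal qS = ennreal (phiL r * qS)" using phiL_nonneg[of r] qS r by (simp add: ennreal_mult)
  have e2: "ennreal cp * ennreal pS = ennreal (cp * pS)" "ennreal cm * ennreal pS = ennreal (cm * pS)"
    using cpm pS by (simp_all add: ennreal_mult)
  have e3: "ennreal (cm * r) * ennreal qS = ennreal (cm * pS)" "ennreal (cp * r) * ennreal qS = ennreal (cp * pS)"
    using cpm r qS rq by (simp_all add: ennreal_mult[symmetric] mult.assoc)
  have "ennreal (phiL r * qS) \<le> ?X"
  proof (cases ?X)
    case (real x)
    have pr: "0 \<le> phiL r * qS" "0 \<le> cp * pS" "0 \<le> cm * pS" using phiL_nonneg[of r] r qS cpm pS by auto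
    have "phiL r * qS + cp * pS + cm * pS \<le> x + cp * pS + cm * pS"
      using ineq unfolding e1 e2 e3 real using pr real
      by (simp add: ennreal_plus[symmetric] del: ennreal_plus)
    then show ?thesis using real by simp
  qed simp
  moreover have "phiL r * qS = pS * ln (pS / qS) - pS + qS"
    using rq by (simp add: phiL_def r_def[symmetric] algebra_simps)
  ultimately show ?thesis using XD by simp
qed

end


lemma ln_ge_1_minus_inv': "0 < x \<Longrightarrow> 1 - 1 / x \<le> ln (x::real)"
proof -
  assume x: "0 < x"
  have "ln (1/x) \<le> 1/x - 1" using x by (intro ln_le_minus_one) auto
  then show ?thesis using x by (simp add: ln_div)
qed

lemma Phi_sets: "\<phi> \<in> Phi \<mu> \<Longrightarrow> {x \<in> space \<mu>. \<phi> x = u} \<in> sets \<mu>"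
  unfolding Phi_def by measurable

lemma qpmf_sum:
  assumes P: "prob_space (Qm \<mu> f m)" and \<phi>: "\<phi> \<in> Phi \<mu>"
  shows "qpmf \<mu> f m \<phi> True + qpmf \<mu> f m \<phi> False = 1" and "0 \<le> qpmf \<mu> f m \<phi> u"
proof -
  interpret P: prob_space "Qm \<mu> f m" by (rule P)
  have sp: "space (Qm \<mu> f m) = space \<mu>" "sets (Qm \<mu> f m) = sets \<mu>" by (simp_all add: Qm_def)
  have A: "{x \<in> space \<mu>. \<phi> x = True} \<in> P.events" using Phi_sets[OF \<phi>, of True] sp by simp
  have "space \<mu> - {x \<in> space \<mu>. \<phi> x = True} = {x \<in> space \<mu>. \<phi> x = False}" by auto
  then show "qpmf \<mu> f m \<phi> True + qpmf \<mu> f m \<phi> False = 1"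
    using P.prob_compl[OF A] sp unfolding qpmf_def by simp
  show "0 \<le> qpmf \<mu> f m \<phi> u" by (simp add: qpmf_def)
qed

locale qsetup =
  fixes \<mu> :: "'x measure" and f :: "nat \<Rightarrow> 'x \<Rightarrow> real" and m m' :: nat
  assumes fm: "f m \<in> borel_measurable \<mu>" "\<forall>x\<in>space \<mu>. 0 \<le> f m x" "prob_space (Qm \<mu> f m)"
    and fm': "f m' \<in> borel_measurable \<mu>" "\<forall>x\<in>space \<mu>. 0 \<le> f m' x" "prob_space (Qm \<mu> f m')"
    and ae: "AE x in Qm \<mu> f m. 0 < f m' x"
    and intg: "integrable (Qm \<mu> f m) (\<lambda>x. ln (f m x / f m' x))"
begin

abbreviation "P \<equiv> Qm \<mu> f m"
abbreviation "Q \<equiv> Qm \<mu> f m'"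

lemma spP: "space P = space \<mu>" "sets P = sets \<mu>" "space Q = space \<mu>" "sets Q = sets \<mu>"
  by (simp_all add: Qm_def)

lemma emP: "A \<in> sets \<mu> \<Longrightarrow> emeasure P A = (\<integral>\<^sup>+ x. ennreal (f m x) * indicator A x \<partial>\<mu>)"
  unfolding Qm_def using fm by (intro emeasure_density) auto

lemma emQ: "A \<in> sets \<mu> \<Longrightarrow> emeasure Q A = (\<integral>\<^sup>+ x. ennreal (f m' x) * indicator A x \<partial>\<mu>)"
  unfolding Qm_def using fm' by (intro emeasure_density) auto

lemma ae_mu: "AE x in \<mu>. 0 < f m x \<longrightarrow> 0 < f m' x"
  using ae fm unfolding Qm_def by (subst (asm) AE_density) auto

lemma abscont_set:
  assumes A: "A \<in> sets \<mu>" and z: "measure Q A = 0"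
  shows "measure P A = 0"
proof -
  interpret Q: prob_space Q by (rule fm'(3))
  interpret P: prob_space P by (rule fm(3))
  have "emeasure Q A = 0" using z Q.emeasure_eq_measure by simp
  then have "(\<integral>\<^sup>+ x. ennreal (f m' x) * indicator A x \<partial>\<mu>) = 0" using emQ[OF A] by simp
  then have "AE x in \<mu>. ennreal (f m' x) * indicator A x = 0"
    using fm' A by (subst (asm) nn_integral_0_iff_AE) auto
  then have "AE x in \<mu>. ennreal (f m x) * indicator A x = 0"
    using ae_mu
  proof (eventually_elim)
    case (elim x)
    show ?case
    proof (cases "x \<in> A")
      case True
      then have "f m' x \<le> 0" using elim by (simp add: indicator_def ennreal_eq_0_iff)
      then have "\<not> 0 < f m x" using elim by auto
      then show ?thesis by (simp add: ennreal_eq_0_iff)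
    qed simp
  qed
  then have "(\<integral>\<^sup>+ x. ennreal (f m x) * indicator A x \<partial>\<mu>) = 0"
    using fm A by (subst nn_integral_0_iff_AE) auto
  then have "emeasure P A = 0" using emP[OF A] by simp
  then show ?thesis using P.emeasure_eq_measure by simp
qed

lemma set_bound:
  assumes A: "A \<in> sets \<mu>"
  defines "a \<equiv> measure P A" and "b \<equiv> measure Q A"
  shows "a * ln (a / b) \<le> (\<integral>x. indicator A x * ln (f m x / f m' x) \<partial>P)"
proof -
  interpret Q: prob_space Q by (rule fm'(3))
  interpret P: prob_space P by (rule fm(3))
  let ?g = "\<lambda>x. ln (f m x / f m' x)"
  have AP: "A \<in> sets P" using A spP by simp
  have gm: "?g \<in> borel_measurable P" using intg by (rule borel_measurable_integrable)
  show ?thesis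
  proof (cases "a = 0")
    case True
    have "emeasure P A = 0" using True P.emeasure_eq_measure a_def by simp
    then have "AE x in P. x \<notin> A" using AP by (intro AE_not_in) auto
    then have "(\<integral>x. indicator A x * ?g x \<partial>P) = (\<integral>x. 0 \<partial>P)"
      using gm AP by (intro integral_cong_AE) auto
    then show ?thesis using True by simp
  next
    case False
    then have ap: "0 < a" using measure_nonneg[of P A] unfolding a_def by linarith
    have bp: "0 < b" 
    proof -
      have "b \<noteq> 0" using abscont_set[OF A] False unfolding a_def b_def by blast
      moreover have "0 \<le> b" unfolding b_def by (rule measure_nonneg)
      ultimately show ?thesis by linarith
    qed
    define c where "c = ln (a / b)"
    define h where "h x = f m' x / f m x" for x
    have hmu: "h \<in> borel_measurable \<mu>" unfolding h_def using fm'(1) fm(1) by (rule borel_measurable_divide)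
    then have hm: "h \<in> borel_measurable P" by (simp add: Qm_def)
    have hmu2: "(\<lambda>x. ennreal (indicator A x * h x)) \<in> borel_measurable \<mu>" using hmu A by measurable
    have h_nn: "(\<integral>\<^sup>+ x. ennreal (indicator A x * h x) \<partial>P) \<le> ennreal b"
    proof -
      have "(\<integral>\<^sup>+ x. ennreal (indicator A x * h x) \<partial>P) = (\<integral>\<^sup>+ x. ennreal (f m x) * ennreal (indicator A x * h x) \<partial>\<mu>)"
        unfolding Qm_def using fm hmu2 by (subst nn_integral_density) auto
      also have "\<dots> \<le> (\<integral>\<^sup>+ x. ennreal (f m' x) * indicator A x \<partial>\<mu>)"
      proof (intro nn_integral_mono)
        fix x assume x: "x \<in> space \<mu>"
        show "ennreal (f m x) * ennreal (indicator A x * h x) \<le> ennreal (f m' x) * indicator A x"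
        proof (cases "f m x = 0")
          case True then show ?thesis by simp
        next
          case False
          then have eq: "f m x * (indicator A x * h x) = f m' x * indicator A x" by (simp add: h_def)
          have nn: "0 \<le> f m x" "0 \<le> indicator A x * h x" "0 \<le> f m' x" using fm(2) fm'(2) x by (auto simp: h_def indicator_def)
          have "ennreal (f m x) * ennreal (indicator A x * h x) = ennreal (f m x * (indicator A x * h x))"
            using nn by (simp add: ennreal_mult)
          also have "\<dots> = ennreal (f m' x * indicator A x)" by (simp only: eq)
          also have "\<dots> = ennreal (f m' x) * indicator A x"
            using nn by (simp add: ennreal_mult ennreal_indicator)
          finally show ?thesis by simp
        qed
      qed
      also have "\<dots> = ennreal b" using emQ[OF A] Q.emeasure_eq_measure b_def by simp
      finally show ?thesis .
    qed
    have hint: "integrable P (\<lambda>x. indicator A x * h x)"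
    proof (rule integrableI_bounded)
      show "(\<lambda>x. indicator A x * h x) \<in> borel_measurable P" using hm AP by measurable
      have "(\<integral>\<^sup>+ x. ennreal (norm (indicator A x * h x)) \<partial>P) = (\<integral>\<^sup>+ x. ennreal (indicator A x * h x) \<partial>P)"
        using fm(2) fm'(2) spP by (intro nn_integral_cong) (auto simp: h_def indicator_def)
      then show "(\<integral>\<^sup>+ x. ennreal (norm (indicator A x * h x)) \<partial>P) < \<infinity>" using h_nn by (simp add: le_less_trans)
    qed
    have hle: "(\<integral>x. indicator A x * h x \<partial>P) \<le> b"
    proof -
      have "ennreal (\<integral>x. indicator A x * h x \<partial>P) = (\<integral>\<^sup>+ x. ennreal (indicator A x * h x) \<partial>P)"
        using hint fm(2) fm'(2) spP by (intro nn_integral_eq_integral[symmetric]) (auto simp: h_def indicator_def intro!: AE_I2)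
      then show ?thesis using h_nn bp by (metis ennreal_le_iff order_less_imp_le)
    qed
    have aeP: "AE x in P. 0 < f m x \<and> 0 < f m' x"
      using ae fm unfolding Qm_def by (subst AE_density) (auto simp: AE_density)
    have pw: "AE x in P. indicator A x * (c + 1) - (a / b) * (indicator A x * h x) \<le> indicator A x * ?g x"
      using aeP
    proof eventually_elim
      case (elim x)
      show ?case
      proof (cases "x \<in> A")
        case True
        have y: "0 < (f m x / f m' x) * (b / a)" using elim ap bp by simp
        have "1 - 1 / ((f m x / f m' x) * (b / a)) \<le> ln ((f m x / f m' x) * (b / a))" by (rule ln_ge_1_minus_inv'[OF y])
        also have "\<dots> = ?g x - c" using elim ap bp by (simp add: ln_mult_pos ln_div c_def)
        also have "1 - 1 / ((f m x / f m' x) * (b / a)) = 1 - (a / b) * h x" using elim ap bp by (simp add: h_def field_simps)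
        finally show ?thesis using True by simp
      qed simp
    qed
    have iA: "integrable P (\<lambda>x. indicator A x * (c + 1))"
      using AP P.emeasure_finite[of A] by (intro integrable_mult_left) (simp add: integrable_indicator_iff less_top[symmetric])
    have "(\<integral>x. indicator A x * (c + 1) - (a / b) * (indicator A x * h x) \<partial>P) \<le> (\<integral>x. indicator A x * ?g x \<partial>P)"
    proof (rule integral_mono_AE[OF _ _ pw])
      show "integrable P (\<lambda>x. indicator A x * (c + 1) - a / b * (indicator A x * h x))"
        using hint iA by (intro Bochner_Integration.integrable_diff integrable_mult_right)
      show "integrable P (\<lambda>x. indicator A x * ?g x)"
        using integrable_real_mult_indicator[OF AP intg] by (simp add: mult.commute)
    qed
    moreover have "(\<integral>x. indicator A x * (c + 1) - (a / b) * (indicator A x * h x) \<partial>P) = a * (c + 1) - (a / b) * (\<integral>x. indicator A x * h x \<partial>P)"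
      using hint iA AP by (subst Bochner_Integration.integral_diff) (auto simp: a_def)
    moreover have "(a / b) * (\<integral>x. indicator A x * h x \<partial>P) \<le> (a / b) * b" using hle ap bp by (intro mult_left_mono) auto
    ultimately show ?thesis using bp by (simp add: c_def algebra_simps)
  qed
qed

lemma Idet_le_KL:
  assumes \<phi>: "\<phi> \<in> Phi \<mu>"
  shows "Idet \<mu> f m m' \<phi> \<le> (\<integral>x. ln (f m x / f m' x) \<partial>P)"
proof -
  interpret P: prob_space P by (rule fm(3))
  let ?g = "\<lambda>x. ln (f m x / f m' x)"
  let ?A = "\<lambda>u. {x \<in> space \<mu>. \<phi> x = u}"
  have As: "?A u \<in> sets \<mu>" for u using Phi_sets[OF \<phi>] .
  have i1: "integrable P (\<lambda>x. indicator (?A u) x * ?g x)" for u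
    using integrable_real_mult_indicator[OF _ intg, of "?A u"] As spP by (simp add: mult.commute)
  have "Idet \<mu> f m m' \<phi> = qpmf \<mu> f m \<phi> True * ln (qpmf \<mu> f m \<phi> True / qpmf \<mu> f m' \<phi> True)
      + qpmf \<mu> f m \<phi> False * ln (qpmf \<mu> f m \<phi> False / qpmf \<mu> f m' \<phi> False)"
    by (simp add: Idet_def UNIV_bool)
  also have "\<dots> \<le> (\<integral>x. indicator (?A True) x * ?g x \<partial>P) + (\<integral>x. indicator (?A False) x * ?g x \<partial>P)"
    using set_bound[OF As, of True] set_bound[OF As, of False] by (intro add_mono) (simp_all add: qpmf_def)
  also have "\<dots> = (\<integral>x. indicator (?A True) x * ?g x + indicator (?A False) x * ?g x \<partial>P)"
    by (intro Bochner_Integration.integral_add[symmetric] i1)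
  also have "\<dots> = (\<integral>x. ?g x \<partial>P)"
    by (rule Bochner_Integration.integral_cong) (auto simp: spP indicator_def)
  finally show ?thesis .
qed

end


lemma nn_pmf_of_lessThan: "n \<noteq> 0 \<Longrightarrow> (\<integral>\<^sup>+ k. g k \<partial>pmf_of_set {..<n}) = (\<Sum>k<n. g k) / of_nat n"
  by (subst nn_integral_pmf_of_set) auto

lemma mixture:
  fixes P :: "nat \<Rightarrow> 's pmf" and ns :: "'s \<Rightarrow> bool" and Z :: "'s \<Rightarrow> 'q"
  assumes pos: "(\<Sum>k<n. measure (P k) {s. ns s}) > 0"
  shows "\<exists>pb. set_pmf pb \<subseteq> (\<Union>k<n. Z ` (set_pmf (P k) \<inter> {s. ns s})) \<and>
     (\<forall>F. ennreal (\<Sum>k<n. measure (P k) {s. ns s}) * (\<integral>\<^sup>+ x. F x \<partial>pb) =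
          (\<Sum>k<n. \<integral>\<^sup>+ s. (if ns s then F (Z s) else 0) \<partial>P k))"
proof -
  have n: "n \<noteq> 0"
  proof
    assume "n = 0" then show False using pos by simp
  qed
  have setn: "set_pmf (pmf_of_set {..<n}) = {..<n}" using n by (intro set_pmf_of_set) auto
  define J where "J = bind_pmf (pmf_of_set {..<n}) (\<lambda>k. map_pmf (Pair k) (P k))"
  define E :: "(nat \<times> 's) set" where "E = {x. ns (snd x)}"
  obtain k where k: "k < n" "measure (P k) {s. ns s} > 0"
  proof (rule ccontr)
    assume "\<not> thesis"
    then have "\<forall>k<n. measure (P k) {s. ns s} \<le> 0" using that by force
    then have "(\<Sum>k<n. measure (P k) {s. ns s}) \<le> 0" by (intro sum_nonpos) auto
    then show False using pos by simp
  qed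
  then obtain s where s: "s \<in> set_pmf (P k)" "ns s"
    by (metis (mono_tags, lifting) measure_pmf_posI measure_Int_set_pmf disjoint_iff emptyE inf_commute
       measure_empty mem_Collect_eq order_less_irrefl)
  have "(k, s) \<in> set_pmf J \<inter> E"
    using k s n by (auto simp: J_def E_def setn)
  then have ne: "set_pmf J \<inter> E \<noteq> {}" by blast
  define pb where "pb = map_pmf (\<lambda>x. Z (snd x)) (cond_pmf J E)"
  have setpb: "set_pmf pb \<subseteq> (\<Union>k<n. Z ` (set_pmf (P k) \<inter> {s. ns s}))"
  proof -
    have "set_pmf pb = (\<lambda>x. Z (snd x)) ` (set_pmf J \<inter> E)" unfolding pb_def using set_cond_pmf[OF ne] by simp
    then show ?thesis by (auto simp: J_def E_def setn)
  qed
  let ?S = "ennreal (\<Sum>k<n. measure (P k) {s. ns s})"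
  have emJ: "emeasure J E = ?S / of_nat n"
  proof -
    have "emeasure J E = (\<Sum>k<n. emeasure (P k) {s. ns s}) / of_nat n"
      unfolding J_def E_def using n
      by (simp add: nn_pmf_of_lessThan vimage_def)
    also have "(\<Sum>k<n. emeasure (P k) {s. ns s}) = ?S"
      by (simp add: measure_pmf.emeasure_eq_measure sum_ennreal)
    finally show ?thesis .
  qed
  have Spos: "?S \<noteq> 0" "?S \<noteq> \<infinity>" using pos by auto
  have nn: "(of_nat n :: ennreal) \<noteq> 0" "(of_nat n :: ennreal) \<noteq> \<infinity>" using n by auto
  have "?S * (\<integral>\<^sup>+ x. F x \<partial>pb) = (\<Sum>k<n. \<integral>\<^sup>+ s. (if ns s then F (Z s) else 0) \<partial>P k)" for F
  proof -
    have "(\<integral>\<^sup>+ x. F x \<partial>pb) = (\<integral>\<^sup>+ x. F (Z (snd x)) \<partial>uniform_measure (measure_pmf J) E)"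
      unfolding pb_def by (simp add: cond_pmf.rep_eq[OF ne])
    also have "\<dots> = (\<integral>\<^sup>+ x. F (Z (snd x)) * indicator E x \<partial>J) / emeasure J E"
      by (rule nn_integral_uniform_measure) auto
    also have "(\<integral>\<^sup>+ x. F (Z (snd x)) * indicator E x \<partial>J) = (\<Sum>k<n. \<integral>\<^sup>+ s. (if ns s then F (Z s) else 0) \<partial>P k) / of_nat n"
      unfolding J_def E_def using n
      by (simp add: nn_pmf_of_lessThan indicator_def, intro arg_cong2[where f="(/)"] sum.cong refl nn_integral_cong, simp)
    finally have "(\<integral>\<^sup>+ x. F x \<partial>pb) = ((\<Sum>k<n. \<integral>\<^sup>+ s. (if ns s then F (Z s) else 0) \<partial>P k) / of_nat n) / (?S / of_nat n)"
      unfolding emJ .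
    also have "\<dots> = (\<Sum>k<n. \<integral>\<^sup>+ s. (if ns s then F (Z s) else 0) \<partial>P k) / ?S"
      unfolding divide_ennreal_def[of _ "of_nat n"]
      by (rule divide_mult_eq) (use nn in \<open>auto simp: ennreal_inverse_positive\<close>)
    finally show ?thesis using Spos
      by (simp add: ennreal_times_divide mult.commute[of ?S] mult_divide_eq_ennreal)
  qed
  then show ?thesis using setpb by blast
qed


definition qq :: "'x measure \<Rightarrow> (nat \<Rightarrow> 'x \<Rightarrow> real) \<Rightarrow> nat \<Rightarrow> 'x quant \<Rightarrow> real" where
  "qq \<mu> f m = (\<lambda>\<phi>. qpmf \<mu> f m \<phi> True)"

lemma qb_qq: assumes "prob_space (Qm \<mu> f m)" "\<phi> \<in> Phi \<mu>"
  shows "qb (qq \<mu> f m) \<phi> u = qpmf \<mu> f m \<phi> u"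
  using qpmf_sum[OF assms] by (cases u) (auto simp: qb_def qq_def)

lemma twoq_inst:
  assumes qs: "qsetup \<mu> f m m'" and pol: "\<forall>h. set_pmf (pol h) \<subseteq> Phi \<mu>"
  shows "twoq (qq \<mu> f m) (qq \<mu> f m') (Phi \<mu>) pol"
proof -
  interpret qsetup \<mu> f m m' by (rule qs)
  have Pm: "prob_space (Qm \<mu> f m)" and Pm': "prob_space (Qm \<mu> f m')" using fm fm' by auto
  show ?thesis
  proof
    fix \<phi> assume \<phi>: "\<phi> \<in> Phi \<mu>"
    show "0 \<le> qq \<mu> f m \<phi> \<and> qq \<mu> f m \<phi> \<le> 1" using qpmf_sum(1)[OF Pm \<phi>] qpmf_sum(2)[OF Pm \<phi>, where u=False] qpmf_sum(2)[OF Pm \<phi>, where u=True]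
      unfolding qq_def by linarith
    show "0 \<le> qq \<mu> f m' \<phi> \<and> qq \<mu> f m' \<phi> \<le> 1" using qpmf_sum(1)[OF Pm' \<phi>] qpmf_sum(2)[OF Pm' \<phi>, where u=False] qpmf_sum(2)[OF Pm' \<phi>, where u=True]
      unfolding qq_def by linarith
    fix u assume "qb (qq \<mu> f m') \<phi> u = 0"
    then have "measure (Qm \<mu> f m') {x \<in> space \<mu>. \<phi> x = u} = 0" using qb_qq[OF Pm' \<phi>] by (simp add: qpmf_def)
    then have "measure (Qm \<mu> f m) {x \<in> space \<mu>. \<phi> x = u} = 0" using abscont_set Phi_sets[OF \<phi>] by blast
    then show "qb (qq \<mu> f m) \<phi> u = 0" using qb_qq[OF Pm \<phi>] by (simp add: qpmf_def)
  next
    fix h show "set_pmf (pol h) \<subseteq> Phi \<mu>" using pol by auto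
  qed
qed

lemma Iq_Idet: assumes "prob_space (Qm \<mu> f m)" "prob_space (Qm \<mu> f m')" "\<phi> \<in> Phi \<mu>"
  shows "Iq (qq \<mu> f m) (qq \<mu> f m') \<phi> = Idet \<mu> f m m' \<phi>"
  unfolding Iq_def Idet_def using qb_qq[OF assms(1,3)] qb_qq[OF assms(2,3)] by simp

lemma strajs_emeasure_real: "emeasure (strajs q pol stop n) A = ennreal (measure (strajs q pol stop n) A)"
  by (simp add: measure_pmf.emeasure_eq_measure)

lemma ns_link: "measure (strajs (qq \<mu> f m) pol stop n) {s. \<not> stop s} = measure (traj \<mu> f pol m n) {s. \<not> stopped_by stop n s}"
proof -
  have "ennreal (measure (strajs (qq \<mu> f m) pol stop n) {s. \<not> stop s}) = ennreal (measure (traj \<mu> f pol m n) {s. \<not> stopped_by stop n s})"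
    using strajs_not_stop[of "qq \<mu> f m" pol stop n] unfolding traj_eq qq_def
    by (simp add: measure_pmf.emeasure_eq_measure)
  then show ?thesis by simp
qed

lemma err_link: "measure (strajs (qq \<mu> f m) pol stop n) {s. stop s \<and> B s} = (\<Sum>k\<le>n. measure (traj \<mu> f pol m k) {s. stops_at stop k s \<and> B s})"
proof -
  have "ennreal (measure (strajs (qq \<mu> f m) pol stop n) {s. stop s \<and> B s}) = ennreal (\<Sum>k\<le>n. measure (traj \<mu> f pol m k) {s. stops_at stop k s \<and> B s})"
    using strajs_stop_B[of "qq \<mu> f m" pol stop n B] unfolding traj_eq qq_def
    by (simp add: measure_pmf.emeasure_eq_measure sum_ennreal)
  then show ?thesis by (simp add: sum_nonneg)
qed

lemma err_bound: "measure (strajs (qq \<mu> f m) pol stop n) {s. stop s \<and> dec s \<noteq> m} \<le> error_prob \<mu> f pol stop dec m"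
proof -
  let ?a = "\<lambda>k. measure (traj \<mu> f pol m k) {s. stops_at stop k s \<and> dec s \<noteq> m}"
  have part: "(\<Sum>k\<le>n. ?a k) = measure (strajs (qq \<mu> f m) pol stop n) {s. stop s \<and> dec s \<noteq> m}" for n
    by (rule err_link[symmetric])
  have summ: "summable ?a"
  proof (rule summableI_nonneg_bounded[where x=1])
    fix n show "(\<Sum>k<n. ?a k) \<le> 1"
    proof (cases n)
      case 0 then show ?thesis by simp
    next
      case (Suc n') then show ?thesis using part[of n'] by (simp add: lessThan_Suc_atMost)
    qed
  qed simp
  have "(\<Sum>k\<le>n. ?a k) \<le> suminf ?a" by (rule sum_le_suminf[OF summ]) auto
  then show ?thesis using part[of n] by (simp add: error_prob_def)
qed


lemma final_real:
  fixes p q a T e :: real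
  assumes q: "0 < q" "q \<le> a" and a: "0 < a" and T: "T \<le> ln (1/a)" "0 \<le> T" "a * T \<le> 1"
    and e: "e * T \<le> 1" and p: "1 - e - a \<le> p" "p \<le> 1" "0 < p"
  shows "T - 4 \<le> p * ln (p / q) - p + q"
proof -
  have l1: "ln (p / q) = ln p + ln (1 / q)" using p q by (simp add: ln_div)
  have "ln (1/a) \<le> ln (1/q)" using q a by (subst ln_le_cancel_iff) (auto simp: field_simps)
  then have l2: "T \<le> ln (1/q)" using T by simp
  have "1 - 1 / p \<le> ln p" using p by (intro ln_ge_1_minus_inv') auto
  then have "p * (1 - 1/p) \<le> p * ln p" using p by (intro mult_left_mono) auto
  moreover have "p * (1 - 1/p) = p - 1" using p by (simp add: field_simps)
  ultimately have l3: "p - 1 \<le> p * ln p" by simp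
  have l4: "p * T \<le> p * ln (1/q)" using l2 p by (intro mult_left_mono) auto
  have l5: "(1 - e - a) * T \<le> p * T" using p T by (intro mult_right_mono) auto
  have "p * ln (p / q) - p + q = p * ln p + p * ln (1/q) - p + q" using l1 by (simp add: algebra_simps)
  moreover have "(1 - e - a) * T = T - e * T - a * T" by (simp add: algebra_simps)
  ultimately show ?thesis using l3 l4 l5 e T q p by linarith
qed

context twoq begin

lemma zero_transfer:
  assumes "measure (strajs q' pol stop n) S = 0"
  shows "measure (strajs q pol stop n) S = 0"
proof -
  have "emeasure (strajs q' pol stop n) S = 0" using assms by (simp add: measure_pmf.emeasure_eq_measure)
  then have ae: "AE s in strajs q' pol stop n. s \<notin> S" by (intro AE_not_in) auto
  have "emeasure (strajs q pol stop n) S = (\<integral>\<^sup>+ s. indicator S s \<partial>strajs q pol stop n)" by simp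
  also have "\<dots> = (\<integral>\<^sup>+ s. ennreal (LL q q' s) * indicator S s \<partial>strajs q' pol stop n)" by (rule dens_integral)
  also have "\<dots> = (\<integral>\<^sup>+ s. 0 \<partial>strajs q' pol stop n)" using ae by (intro nn_integral_cong_AE) auto
  finally show ?thesis by (simp add: measure_pmf.emeasure_eq_measure)
qed

end


lemma Idet_bounds:
  assumes qs: "qsetup \<mu> f m m'" and \<phi>: "\<phi> \<in> Phi \<mu>"
  shows "0 \<le> Idet \<mu> f m m' \<phi>" "Idet \<mu> f m m' \<phi> \<le> (\<integral>x. ln (f m x / f m' x) \<partial>Qm \<mu> f m)"
proof -
  interpret qsetup \<mu> f m m' by (rule qs)
  interpret twoq "qq \<mu> f m" "qq \<mu> f m'" "Phi \<mu>" "\<lambda>_. return_pmf \<phi>"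
    by (rule twoq_inst[OF qs]) (use \<phi> in auto)
  show "0 \<le> Idet \<mu> f m m' \<phi>" using Iq_nonneg[OF \<phi>] Iq_Idet[OF fm(3) fm'(3) \<phi>] by simp
  show "Idet \<mu> f m m' \<phi> \<le> (\<integral>x. ln (f m x / f m' x) \<partial>Qm \<mu> f m)" by (rule Idet_le_KL[OF \<phi>])
qed

lemma Irand_nn:
  assumes qs: "qsetup \<mu> f m m'" and pb: "set_pmf pb \<subseteq> Phi \<mu>"
  shows "(\<integral>\<^sup>+ x. ennreal (Idet \<mu> f m m' x) \<partial>pb) = ennreal (Irand \<mu> f m m' pb)"
proof -
  let ?K = "\<integral>x. ln (f m x / f m' x) \<partial>Qm \<mu> f m"
  have b: "x \<in> set_pmf pb \<Longrightarrow> 0 \<le> Idet \<mu> f m m' x \<and> Idet \<mu> f m m' x \<le> ?K" for x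
    using Idet_bounds[OF qs] pb by blast
  have int: "integrable pb (Idet \<mu> f m m')"
    by (rule measure_pmf.integrable_const_bound[where B="?K"]) (use b in \<open>auto intro!: AE_pmfI\<close>)
  show ?thesis unfolding Irand_def
    by (rule nn_integral_eq_integral[OF int]) (use b in \<open>auto intro!: AE_pmfI\<close>)
qed

lemma Dn_eq:
  assumes qs: "qsetup \<mu> f m m'" and quant: "\<forall>h. set_pmf (pol h) \<subseteq> Phi \<mu>"
  shows "twoq.Dn (qq \<mu> f m) (qq \<mu> f m') pol stop n =
    (\<Sum>k<n. \<integral>\<^sup>+ s. (if \<not> stop s then ennreal (Idet \<mu> f m m' (snd s)) else 0) \<partial>strajs (qq \<mu> f m) pol stop k)"
proof -
  interpret qsetup \<mu> f m m' by (rule qs)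
  interpret T1: twoq "qq \<mu> f m" "qq \<mu> f m'" "Phi \<mu>" pol by (rule twoq_inst[OF qs quant])
  show ?thesis unfolding T1.Dn_sum
  proof (intro sum.cong refl nn_integral_cong_AE AE_pmfI)
    fix k s assume "s \<in> set_pmf (strajs (qq \<mu> f m) pol stop k)"
    then have "snd s \<in> Phi \<mu>" by (rule T1.strajs_snd)
    then show "(if stop s then 0 else ennreal (Iq (qq \<mu> f m) (qq \<mu> f m') (snd s))) =
        (if \<not> stop s then ennreal (Idet \<mu> f m m' (snd s)) else 0)"
      using Iq_Idet[OF fm(3) fm'(3)] by simp
  qed
qed


lemma core:
  fixes \<mu> :: "'x measure" and f M pol stop dec m a T
  assumes M2: "2 \<le> M"
   and qs: "\<And>m1 m2. m1 < M \<Longrightarrow> m2 < M \<Longrightarrow> m1 \<noteq> m2 \<Longrightarrow> qsetup \<mu> f m1 m2"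
   and quant: "\<forall>h. set_pmf (pol h) \<subseteq> Phi \<mu>"
   and m: "m < M"
   and bdd: "bdd_above (Imin M \<mu> f m ` randomized_quantizers \<mu>)"
   and Ipos: "0 < Imaximin M \<mu> f m"
   and err: "\<And>m''. m'' < M \<Longrightarrow> error_prob \<mu> f pol stop dec m'' \<le> a"
   and a: "0 < a" "a \<le> 1/4" and T: "0 \<le> T" "T \<le> ln (1/a)" "a * T \<le> 1"
  shows "ennreal ((T - 4) / Imaximin M \<mu> f m) \<le> expected_N \<mu> f pol stop m"
proof -
  define I where "I = Imaximin M \<mu> f m"
  define E where "E = expected_N \<mu> f pol stop m"
  define P where "P k = strajs (qq \<mu> f m) pol stop k" for k
  define w where "w k = measure (P k) {s. \<not> stop s}" for k
  have wtraj: "w k = measure (traj \<mu> f pol m k) {s. \<not> stopped_by stop k s}" for k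
    unfolding w_def P_def by (rule ns_link)
  have w_nn: "0 \<le> w k" for k by (simp add: w_def)
  have Ew: "E = (\<Sum>k. ennreal (w k))" unfolding E_def expected_N_def wtraj ..
  define m0 where "m0 = (if m = 0 then 1 else 0::nat)"
  have m0: "m0 < M" "m0 \<noteq> m" using M2 by (auto simp: m0_def)
  interpret T0: twoq "qq \<mu> f m" "qq \<mu> f m0" "Phi \<mu>" pol
    by (rule twoq_inst[OF qs[OF m m0(1) m0(2)[symmetric]] quant])
  have sndP: "s \<in> set_pmf (P k) \<Longrightarrow> snd s \<in> Phi \<mu>" for s k unfolding P_def by (rule T0.strajs_snd)
  show ?thesis
  proof (cases "E = \<top>")
    case True then show ?thesis by (simp add: E_def[symmetric])
  next
    case False
    have summ: "summable w" using False unfolding Ew by (intro summable_suminf_not_top w_nn)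
    have Ereal: "E = ennreal (suminf w)" unfolding Ew by (rule suminf_ennreal2[OF w_nn summ])
    have lim: "w \<longlonglongrightarrow> 0" by (rule summable_LIMSEQ_zero[OF summ])
    define e where "e = 1 / (2 * (T + 1))"
    have e: "0 < e" "e * T \<le> 1" "e \<le> 1/2" using T by (auto simp: e_def field_simps)
    obtain n where wn: "w n < e"
      using order_tendstoD(2)[OF lim e(1)] by (auto simp: eventually_sequentially)
    define En where "En = (\<Sum>k<n. w k)"
    have En_nn: "0 \<le> En" unfolding En_def by (intro sum_nonneg w_nn)
    have En_le: "ennreal En \<le> E" unfolding Ereal En_def
      by (intro ennreal_leI sum_le_suminf[OF summ]) (auto simp: w_nn)
    define S where "S = {s. stop s \<and> dec s = m}"
    define p where "p = measure (P n) S"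
    have p_lb: "1 - e - a \<le> p"
    proof -
      have disj: "UNIV = S \<union> ({s. \<not> stop s} \<union> {s. stop s \<and> dec s \<noteq> m})" by (auto simp: S_def)
      have "1 = measure (P n) (S \<union> ({s. \<not> stop s} \<union> {s. stop s \<and> dec s \<noteq> m}))"
        unfolding disj[symmetric] by simp
      also have "\<dots> = p + (w n + measure (P n) {s. stop s \<and> dec s \<noteq> m})"
        by (subst measure_pmf.finite_measure_Union, simp, simp, force simp: S_def,
            subst measure_pmf.finite_measure_Union) (auto simp: p_def w_def)
      finally have eq1: "1 = p + (w n + measure (P n) {s. stop s \<and> dec s \<noteq> m})" .
      have "measure (P n) {s. stop s \<and> dec s \<noteq> m} \<le> a"
        using err_bound[of \<mu> f m pol stop n dec] err[OF m] unfolding P_def by linarith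
      then show ?thesis using eq1 wn by linarith
    qed
    have p_pos: "0 < p" using p_lb e a by linarith
    have p_le: "p \<le> 1" by (simp add: p_def)
    have ex_m': "\<exists>m'. m' < M \<and> m' \<noteq> m \<and> twoq.Dn (qq \<mu> f m) (qq \<mu> f m') pol stop n \<le> ennreal (En * I)"
    proof (cases "En = 0")
      case True
      have wk: "k < n \<Longrightarrow> w k = 0" for k
        using True unfolding En_def by (subst (asm) sum_nonneg_eq_0_iff) (auto simp: w_nn)
      have "(\<integral>\<^sup>+ s. (if \<not> stop s then ennreal (Idet \<mu> f m m0 (snd s)) else 0) \<partial>P k) = 0" if k: "k < n" for k
      proof -
        have "emeasure (P k) {s. \<not> stop s} = 0" using wk[OF k] by (simp add: w_def measure_pmf.emeasure_eq_measure)
        then have "AE s in P k. s \<notin> {s. \<not> stop s}" by (intro AE_not_in) auto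
        then have "(\<integral>\<^sup>+ s. (if \<not> stop s then ennreal (Idet \<mu> f m m0 (snd s)) else 0) \<partial>P k) = (\<integral>\<^sup>+ s. 0 \<partial>P k)"
          by (intro nn_integral_cong_AE) auto
        then show ?thesis by simp
      qed
      then have "twoq.Dn (qq \<mu> f m) (qq \<mu> f m0) pol stop n = 0"
        unfolding Dn_eq[OF qs[OF m m0(1) m0(2)[symmetric]] quant] P_def[symmetric] by simp
      then show ?thesis using m0 by (intro exI[of _ m0]) simp
    next
      case False
      then have Enp: "0 < En" using En_nn by simp
      obtain pb where pbset: "set_pmf pb \<subseteq> (\<Union>k<n. snd ` (set_pmf (P k) \<inter> {s. \<not> stop s}))"
        and pbF: "\<And>F. ennreal En * (\<integral>\<^sup>+ x. F x \<partial>pb) = (\<Sum>k<n. \<integral>\<^sup>+ s. (if \<not> stop s then F (snd s) else 0) \<partial>P k)"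
        using mixture[where n=n and P=P and ns="\<lambda>s. \<not> stop s" and Z=snd] Enp unfolding En_def w_def by blast
      have pbPhi: "set_pmf pb \<subseteq> Phi \<mu>" using pbset sndP by blast
      then have pbR: "pb \<in> randomized_quantizers \<mu>" by (simp add: randomized_quantizers_def)
      have IminI: "Imin M \<mu> f m pb \<le> I" unfolding I_def Imaximin_def by (rule cSUP_upper[OF pbR bdd])
      let ?A = "(\<lambda>m'. Irand \<mu> f m m' pb) ` {m'. m' < M \<and> m' \<noteq> m}"
      have finA: "finite ?A" by simp
      have neA: "?A \<noteq> {}" using m0 by blast
      have "Imin M \<mu> f m pb \<in> ?A" unfolding Imin_def by (rule Min_in[OF finA neA])
      then obtain m' where m': "m' < M" "m' \<noteq> m" and Im': "Irand \<mu> f m m' pb = Imin M \<mu> f m pb" by auto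
      have qs': "qsetup \<mu> f m m'" by (rule qs[OF m m'(1) m'(2)[symmetric]])
      have "twoq.Dn (qq \<mu> f m) (qq \<mu> f m') pol stop n = ennreal En * (\<integral>\<^sup>+ x. ennreal (Idet \<mu> f m m' x) \<partial>pb)"
        unfolding Dn_eq[OF qs' quant] P_def[symmetric] pbF ..
      also have "\<dots> = ennreal En * ennreal (Irand \<mu> f m m' pb)" by (simp add: Irand_nn[OF qs' pbPhi])
      also have "\<dots> \<le> ennreal En * ennreal I" using Im' IminI by (intro mult_left_mono ennreal_leI) auto
      also have "\<dots> = ennreal (En * I)" using En_nn by (simp add: ennreal_mult')
      finally show ?thesis using m' by blast
    qed
    then obtain m' where m': "m' < M" "m' \<noteq> m" and Dm: "twoq.Dn (qq \<mu> f m) (qq \<mu> f m') pol stop n \<le> ennreal (En * I)"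
      by blast
    interpret T1: twoq "qq \<mu> f m" "qq \<mu> f m'" "Phi \<mu>" pol
      by (rule twoq_inst[OF qs[OF m m'(1) m'(2)[symmetric]] quant])
    define q where "q = measure (strajs (qq \<mu> f m') pol stop n) S"
    have q_le: "q \<le> a"
    proof -
      have "q \<le> measure (strajs (qq \<mu> f m') pol stop n) {s. stop s \<and> dec s \<noteq> m'}"
        unfolding q_def S_def using m'(2) by (intro measure_pmf.finite_measure_mono) auto
      also have "\<dots> \<le> a" using err_bound[of \<mu> f m' pol stop n dec] err[OF m'(1)] by linarith
      finally show ?thesis .
    qed
    have q_pos: "0 < q"
    proof -
      have "q \<noteq> 0"
      proof
        assume "q = 0"
        then have "p = 0" using T1.zero_transfer[of stop n S] unfolding q_def p_def P_def by simp
        then show False using p_pos by simp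
      qed
      then show ?thesis by (simp add: q_def order_less_le)
    qed
    have "ennreal (p * ln (p / q) - p + q) \<le> T1.Dn stop n"
      using T1.Dn_ge[of stop n S] p_pos q_pos unfolding p_def q_def P_def by simp
    also have "\<dots> \<le> ennreal (En * I)" using Dm .
    finally have "p * ln (p / q) - p + q \<le> En * I"
      using En_nn Ipos I_def by (simp add: ennreal_le_iff)
    moreover have "T - 4 \<le> p * ln (p / q) - p + q"
      by (rule final_real[OF q_pos q_le a(1) T(2) T(1) T(3) e(2) p_lb p_le p_pos])
    ultimately have "T - 4 \<le> En * I" by linarith
    then have "(T - 4) / I \<le> En" using Ipos I_def by (simp add: divide_le_eq)
    then have "ennreal ((T - 4) / I) \<le> ennreal En" by (rule ennreal_leI)
    then show ?thesis using En_le unfolding I_def E_def by (rule order_trans)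
  qed
qed


theorem theorem4p2:
  fixes \<mu> :: "'x measure" and f :: "nat \<Rightarrow> 'x \<Rightarrow> real" and M :: nat
    and pol :: "real \<Rightarrow> 'x hist \<Rightarrow> 'x quant pmf"
    and stop :: "real \<Rightarrow> 'x state \<Rightarrow> bool"
    and dec :: "real \<Rightarrow> 'x state \<Rightarrow> nat"
  assumes M2: "2 \<le> M"
    and sigma: "sigma_finite_measure \<mu>"
    and dens: "\<forall>m<M. f m \<in> borel_measurable \<mu> \<and> (\<forall>x\<in>space \<mu>. 0 \<le> f m x) \<and> prob_space (Qm \<mu> f m)"
    and standing: "\<forall>m<M. \<forall>m'<M. m \<noteq> m' \<longrightarrow>
        (AE x in Qm \<mu> f m. 0 < f m' x) \<and>
        integrable (Qm \<mu> f m) (\<lambda>x. ln (f m x / f m' x)) \<and>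
        0 < (\<integral>x. ln (f m x / f m' x) \<partial>Qm \<mu> f m)"
    and quantizers: "\<forall>c>0. \<forall>h. set_pmf (pol c h) \<subseteq> Phi \<mu>"
    and decisions: "\<forall>c>0. \<forall>s. dec c s < M"
    and err: "\<forall>m<M. (\<lambda>c. error_prob \<mu> f (pol c) (stop c) (dec c) m) \<in> O[at_right 0](\<lambda>c. c * \<bar>ln c\<bar>)"
  shows "\<forall>m<M. \<exists>C::real. \<forall>\<^sub>F c in at_right 0.
           ennreal ((\<bar>ln c\<bar> - ln \<bar>ln c\<bar> - C) / Imaximin M \<mu> f m)
             \<le> expected_N \<mu> f (pol c) (stop c) m"
proof (intro allI impI)
  fix m assume m: "m < M"
  have qs: "qsetup \<mu> f m1 m2" if "m1 < M" "m2 < M" "m1 \<noteq> m2" for m1 m2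
    unfolding qsetup_def using dens standing that by auto
  define m0 where "m0 = (if m = 0 then 1 else 0::nat)"
  have m0: "m0 < M" "m0 \<noteq> m" using M2 by (auto simp: m0_def)
  define KL where "KL = (\<integral>x. ln (f m x / f m0 x) \<partial>Qm \<mu> f m)"
  have KLpos: "0 < KL" using standing m m0 unfolding KL_def by auto
  have bdd: "bdd_above (Imin M \<mu> f m ` randomized_quantizers \<mu>)"
  proof (rule bdd_aboveI2)
    fix p assume p: "p \<in> randomized_quantizers \<mu>"
    then have pPhi: "set_pmf p \<subseteq> Phi \<mu>" by (simp add: randomized_quantizers_def)
    have "Imin M \<mu> f m p \<le> Irand \<mu> f m m0 p" unfolding Imin_def using m0 by (intro Min_le) auto
    also have "Irand \<mu> f m m0 p \<le> KL"
    proof -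
      have "ennreal (Irand \<mu> f m m0 p) = (\<integral>\<^sup>+ x. ennreal (Idet \<mu> f m m0 x) \<partial>p)"
        by (rule Irand_nn[OF qs[OF m m0(1) m0(2)[symmetric]] pPhi, symmetric])
      also have "\<dots> \<le> (\<integral>\<^sup>+ x. ennreal KL \<partial>p)"
        using Idet_bounds(2)[OF qs[OF m m0(1) m0(2)[symmetric]]] pPhi unfolding KL_def
        by (intro nn_integral_mono_AE AE_pmfI ennreal_leI) auto
      also have "\<dots> = ennreal KL" by (simp add: measure_pmf.emeasure_space_1)
      finally show ?thesis using KLpos by simp
    qed
    finally show "Imin M \<mu> f m p \<le> KL" .
  qed
  have "\<forall>m''<M. \<exists>k>0. \<forall>\<^sub>F c in at_right 0. norm (error_prob \<mu> f (pol c) (stop c) (dec c) m'') \<le> k * norm (c * \<bar>ln c\<bar>)"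
  proof (intro allI impI)
    fix m'' assume "m'' < M"
    then have "(\<lambda>c. error_prob \<mu> f (pol c) (stop c) (dec c) m'') \<in> O[at_right 0](\<lambda>c. c * \<bar>ln c\<bar>)" using err by blast
    then obtain k where "k > 0" "\<forall>\<^sub>F c in at_right 0. norm (error_prob \<mu> f (pol c) (stop c) (dec c) m'') \<le> k * norm (c * \<bar>ln c\<bar>)"
      by (rule landau_o.bigE)
    then show "\<exists>k>0. \<forall>\<^sub>F c in at_right 0. norm (error_prob \<mu> f (pol c) (stop c) (dec c) m'') \<le> k * norm (c * \<bar>ln c\<bar>)" by blast
  qed
  then have "\<forall>m''. \<exists>k. m'' < M \<longrightarrow> k > 0 \<and> (\<forall>\<^sub>F c in at_right 0. norm (error_prob \<mu> f (pol c) (stop c) (dec c) m'') \<le> k * norm (c * \<bar>ln c\<bar>))"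
    by blast
  from choice[OF this] obtain Kf where Kf: "\<forall>m''<M. Kf m'' > 0 \<and> (\<forall>\<^sub>F c in at_right 0. norm (error_prob \<mu> f (pol c) (stop c) (dec c) m'') \<le> Kf m'' * norm (c * \<bar>ln c\<bar>))"
    by blast
  define K where "K = 1 + (\<Sum>m''<M. Kf m'')"
  have Kge: "Kf m'' \<le> K" if "m'' < M" for m''
  proof -
    have "Kf m'' \<le> (\<Sum>m''<M. Kf m'')" using that Kf by (intro member_le_sum) auto
    then show ?thesis by (simp add: K_def)
  qed
  have "0 \<le> (\<Sum>m''<M. Kf m'')" using Kf by (intro sum_nonneg) (auto simp: less_imp_le)
  then have K1: "1 \<le> K" unfolding K_def by simp
  define C where "C = ln K + 4"
  show "\<exists>C::real. \<forall>\<^sub>F c in at_right 0. ennreal ((\<bar>ln c\<bar> - ln \<bar>ln c\<bar> - C) / Imaximin M \<mu> f m) \<le> expected_N \<mu> f (pol c) (stop c) m"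
  proof (intro exI[of _ C])
    have ev_err: "\<forall>\<^sub>F c in at_right 0. \<forall>m''\<in>{..<M}. norm (error_prob \<mu> f (pol c) (stop c) (dec c) m'') \<le> Kf m'' * norm (c * \<bar>ln c\<bar>)"
      using Kf by (subst eventually_ball_finite_distrib) auto
    have ev_pos: "\<forall>\<^sub>F c in at_right (0::real). 0 < c" by (rule eventually_at_right_less)
    have ev_small: "\<forall>\<^sub>F c in at_right (0::real). c < exp (-1)" using order_tendstoD(2)[OF tendsto_ident_at[where a="0::real" and s="{0<..}"], of "exp (-1)"] by simp
    have lim1: "filterlim (\<lambda>c::real. - ln c - ln (- ln c)) at_top (at_right 0)" by real_asymp
    have ev_T: "\<forall>\<^sub>F c in at_right (0::real). C \<le> - ln c - ln (- ln c)"
      using lim1 by (simp add: filterlim_at_top)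
    have lim2: "((\<lambda>c::real. c * (- ln c)) \<longlongrightarrow> 0) (at_right 0)" by real_asymp
    have ev_a: "\<forall>\<^sub>F c in at_right (0::real). c * (- ln c) < 1 / (4 * K)"
      using order_tendstoD(2)[OF lim2] K1 by simp
    have lim3: "((\<lambda>c::real. c * (ln c)^2) \<longlongrightarrow> 0) (at_right 0)" by real_asymp
    have ev_a2: "\<forall>\<^sub>F c in at_right (0::real). c * (ln c)^2 < 1 / K"
      using order_tendstoD(2)[OF lim3] K1 by simp
    show "\<forall>\<^sub>F c in at_right 0. ennreal ((\<bar>ln c\<bar> - ln \<bar>ln c\<bar> - C) / Imaximin M \<mu> f m) \<le> expected_N \<mu> f (pol c) (stop c) m"
      using ev_err ev_pos ev_small ev_T ev_a ev_a2
    proof eventually_elim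
      case (elim c)
      define lc where "lc = - ln c"
      have c: "0 < c" "c < exp (-1)" using elim by auto
      have "ln c < ln (exp (-1))" using c by (subst ln_less_cancel_iff) auto
      then have lc1: "1 < lc" unfolding lc_def by simp
      have abs1: "\<bar>ln c\<bar> = lc" using lc1 by (simp add: lc_def)
      define a where "a = K * c * lc"
      define T where "T = lc - ln lc - ln K"
      have num: "\<bar>ln c\<bar> - ln \<bar>ln c\<bar> - C = T - 4" by (simp add: abs1 T_def C_def)
      have T4: "4 \<le> T" using elim(4) by (simp add: T_def C_def lc_def)
      show ?case
      proof (cases "0 < Imaximin M \<mu> f m")
        case False
        have "(T - 4) / Imaximin M \<mu> f m \<le> 0" using False T4 by (simp add: divide_nonneg_nonpos)
        then have "ennreal ((T - 4) / Imaximin M \<mu> f m) = 0" by (rule ennreal_neg)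
        then show ?thesis unfolding num by simp
      next
        case Ipos: True
        have apos: "0 < a" using K1 c lc1 by (simp add: a_def)
        have err_a: "error_prob \<mu> f (pol c) (stop c) (dec c) m'' \<le> a" if "m'' < M" for m''
        proof -
          have "error_prob \<mu> f (pol c) (stop c) (dec c) m'' \<le> norm (error_prob \<mu> f (pol c) (stop c) (dec c) m'')" by simp
          also have "\<dots> \<le> Kf m'' * norm (c * \<bar>ln c\<bar>)" using elim(1) that by auto
          also have "\<dots> = Kf m'' * (c * lc)" using c abs1 lc1 by simp
          also have "\<dots> \<le> K * (c * lc)" using Kge[OF that] c lc1 by (intro mult_right_mono) auto
          finally show ?thesis by (simp add: a_def mult.assoc)
        qed
        have a14: "a \<le> 1/4"
        proof -
          have "c * lc < 1 / (4 * K)" using elim(5) by (simp add: lc_def)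
          then have "K * (c * lc) < K * (1 / (4 * K))" using K1 by (intro mult_strict_left_mono) auto
          then show ?thesis using K1 by (simp add: a_def mult.assoc)
        qed
        have lnlc: "0 \<le> ln lc" using lc1 by simp
        have lnK: "0 \<le> ln K" using K1 by simp
        have Tle: "T \<le> ln (1/a)"
        proof -
          have "ln a = ln K + ln c + ln lc" using K1 c lc1 by (simp add: a_def ln_mult_pos)
          then show ?thesis using apos by (simp add: ln_div T_def lc_def)
        qed
        have aT: "a * T \<le> 1"
        proof -
          have "T \<le> lc" using lnlc lnK by (simp add: T_def)
          then have "a * T \<le> a * lc" using apos by (intro mult_left_mono) auto
          also have "a * lc = K * (c * (ln c)^2)" by (simp add: a_def lc_def power2_eq_square)
          also have "\<dots> < K * (1 / K)" using elim(6) K1 by (intro mult_strict_left_mono) auto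
          also have "\<dots> = 1" using K1 by simp
          finally show ?thesis by simp
        qed
        have "ennreal ((T - 4) / Imaximin M \<mu> f m) \<le> expected_N \<mu> f (pol c) (stop c) m"
          by (rule core[OF M2 qs _ m bdd Ipos err_a apos a14 _ Tle aT])
             (use quantizers c T4 in auto)
        then show ?thesis unfolding num .
      qed
    qed
  qed
qed


end
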